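(* Consider two distinct regions $A$ and $B$ containing $N_A$ and $N_B$ voxels. For each voxel $i$ of $A$ the observed variable is $Y_i^A = X_i^A + \epsilon_i^A$, and similarly $Y_j^B = X_j^B+\epsilon_j^B$ for voxels $j$ of $B$. Assume $\mathrm{Var}(X_i^A)=\sigma_A^2>0$, $\mathrm{Var}(\epsilon_i^A)=\gamma_A^2$ for all $i$, and $\mathrm{Var}(X_j^B)=\sigma_B^2>0$, $\mathrm{Var}(\epsilon_j^B)=\gamma_B^2$ for all $j$; the noise variables are uncorrelated with each other (within and across regions) and uncorrelated with all latent variables; $\eta^A_{i,i'}=\mathrm{Cor}(X_i^A,X_{i'}^A)$, $\eta^B_{j,j'}=\mathrm{Cor}(X_j^B,X_{j'}^B)$ are arbitrary latent intra-correlations; and $\mathrm{Cor}(X_i^A,X_j^B)=\rho^{A,B}$ for all $i,j$. One observes $n$ i.i.d. (over $t=1,\dots,n$) copies of the whole vector of observed variables, and $\mathbf{Y}_i^A=(Y_i^A(1),\dots,Y_i^A(n))$. Fix a partition of the voxels of $A$ into $N^{clust}_A$ nonempty clusters and of the voxels of $B$ into $N^{clust}_B$ nonempty clusters. For clusters $\nu_A,\nu_B$ let $\overline{\mathbf{Y}}^{\nu_A}=|\nu_A|^{-1}\sum_{i\in\nu_A}\mathbf{Y}_i^A$, $\overline{\mathbf{Y}}^{\nu_B}=|\nu_B|^{-1}\sum_{j\in\nu_B}\mathbf{Y}_j^B$, $r^{CLA}_{\nu_A,\nu_B}=\widehat{Cor}(\overline{\mathbf{Y}}^{\nu_A},\overline{\mathbf{Y}}^{\nu_B})$,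 and $$r^{CLA}_{A,B}=\frac{1}{N^{clust}_A N^{clust}_B}\sum_{\nu_A,\nu_B} r^{CLA}_{\nu_A,\nu_B},$$ the sum being over all pairs of clusters of $A$ and $B$. Then, as $n\to\infty$, $$r^{CLA}_{A,B}\xrightarrow{a.s.}\frac{1}{N^{clust}_A N^{clust}_B}\sum_{\nu_A,\nu_B}\rho^{CLA}_{\nu_A,\nu_B},$$ where $$\rho^{CLA}_{\nu_A,\nu_B}=\frac{\rho^{A,B}}{\sqrt{\left[\frac{1}{|\nu_A|^2}\sum_{i,i'\in\nu_A}\eta^A_{i,i'}+\frac{\gamma_A^2}{|\nu_A|\sigma_A^2}\right]\left[\frac{1}{|\nu_B|^2}\sum_{j,j'\in\nu_B}\eta^B_{j,j'}+\frac{\gamma_B^2}{|\nu_B|\sigma_B^2}\right]}}.$$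
   Context: Sample correlation: for $\mathbf{a},\mathbf{b}\in\mathbb{R}^n$ with means $\bar a,\bar b$, let $\mathbf{a}^c=\mathbf{a}-\bar a\mathbf{1}_n$, $\mathbf{b}^c=\mathbf{b}-\bar b\mathbf{1}_n$; $\widehat{Cov}(\mathbf{a},\mathbf{b})=n^{-1}\langle\mathbf{a}^c,\mathbf{b}^c\rangle$, $\widehat{Var}(\mathbf{a})=n^{-1}\|\mathbf{a}^c\|^2$, $\widehat{Cor}(\mathbf{a},\mathbf{b})=\widehat{Cov}(\mathbf{a},\mathbf{b})/\sqrt{\widehat{Var}(\mathbf{a})\widehat{Var}(\mathbf{b})}$. All variables have finite second moments. The clusters are fixed (non-random). *)

theory Defs
  imports "HOL-Probability.Probability" "HOL-Library.Disjoint_Sets"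
begin

definition pexp :: "'w measure \<Rightarrow> ('w \<Rightarrow> real) \<Rightarrow> real" where
  "pexp M X = integral\<^sup>L M X"

definition pcov :: "'w measure \<Rightarrow> ('w \<Rightarrow> real) \<Rightarrow> ('w \<Rightarrow> real) \<Rightarrow> real" where
  "pcov M X Y = integral\<^sup>L M (\<lambda>w. (X w - pexp M X) * (Y w - pexp M Y))"

definition pvar :: "'w measure \<Rightarrow> ('w \<Rightarrow> real) \<Rightarrow> real" where
  "pvar M X = integral\<^sup>L M (\<lambda>w. (X w - pexp M X)\<^sup>2)"

definition pcor :: "'w measure \<Rightarrow> ('w \<Rightarrow> real) \<Rightarrow> ('w \<Rightarrow> real) \<Rightarrow> real" where
  "pcor M X Y = pcov M X Y / sqrt (pvar M X * pvar M Y)"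

definition smean :: "nat \<Rightarrow> (nat \<Rightarrow> real) \<Rightarrow> real" where
  "smean n a = (\<Sum>t<n. a t) / real n"

definition scov :: "nat \<Rightarrow> (nat \<Rightarrow> real) \<Rightarrow> (nat \<Rightarrow> real) \<Rightarrow> real" where
  "scov n a b = (\<Sum>t<n. (a t - smean n a) * (b t - smean n b)) / real n"

definition svar :: "nat \<Rightarrow> (nat \<Rightarrow> real) \<Rightarrow> real" where
  "svar n a = (\<Sum>t<n. (a t - smean n a)\<^sup>2) / real n"

definition scor :: "nat \<Rightarrow> (nat \<Rightarrow> real) \<Rightarrow> (nat \<Rightarrow> real) \<Rightarrow> real" where
  "scor n a b = scov n a b / sqrt (svar n a * svar n b)"

end

theory Submission
  imports Defs
begin

lemma cesaro:
  fixes a :: "nat \<Rightarrow> real"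
  assumes lim: "a \<longlonglongrightarrow> L"
  shows "(\<lambda>n. (\<Sum>t<n. a t) / real n) \<longlonglongrightarrow> L"
proof (rule LIMSEQ_I)
  fix r :: real assume r: "0 < r"
  then have "0 < r/2" by simp
  from LIMSEQ_D[OF lim this] obtain N where N: "\<And>t. t \<ge> N \<Longrightarrow> norm (a t - L) < r/2" by blast
  define C where "C = (\<Sum>t<N. \<bar>a t - L\<bar>)"
  have C0: "C \<ge> 0" unfolding C_def by (auto intro: sum_nonneg)
  define n0 where "n0 = max (N+1) (nat \<lceil>2*C/r\<rceil> + 1)"
  show "\<exists>no. \<forall>n\<ge>no. norm ((\<Sum>t<n. a t) / real n - L) < r"
  proof (intro exI allI impI)
    fix n assume n: "n \<ge> n0"
    then have nN: "n \<ge> N" and npos: "n > 0" unfolding n0_def by auto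
    have nC: "real n > 2*C/r" using n unfolding n0_def by linarith
    have eq: "(\<Sum>t<n. a t) / real n - L = (\<Sum>t<n. (a t - L)) / real n"
      using npos by (simp add: sum_subtractf field_simps)
    have split: "{..<n} = {..<N} \<union> {N..<n}" using nN by auto
    have "\<bar>\<Sum>t<n. (a t - L)\<bar> \<le> (\<Sum>t<n. \<bar>a t - L\<bar>)" by (rule sum_abs)
    also have "\<dots> = C + (\<Sum>t\<in>{N..<n}. \<bar>a t - L\<bar>)"
      unfolding C_def split by (subst sum.union_disjoint) auto
    also have "(\<Sum>t\<in>{N..<n}. \<bar>a t - L\<bar>) \<le> (\<Sum>t\<in>{N..<n}. r/2)"
      using N by (intro sum_mono) (auto intro: less_imp_le)
    also have "(\<Sum>t\<in>{N..<n}. r/2) \<le> real n * (r/2)" using r by simp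
    finally have b: "\<bar>\<Sum>t<n. (a t - L)\<bar> \<le> C + real n * (r/2)" by simp
    have "C < real n * (r/2)" using nC r by (simp add: field_simps)
    with b have "\<bar>\<Sum>t<n. (a t - L)\<bar> < real n * r" by simp
    then show "norm ((\<Sum>t<n. a t) / real n - L) < r"
      unfolding eq using npos by (simp add: field_simps)
  qed
qed

lemma count_le:
  fixes x :: real assumes "0 \<le> x"
  shows "(\<Sum>t<N. (if real t + 1 < x then 1 else 0)) \<le> x"
proof -
  have "(\<Sum>t<N. (if real t + 1 < x then 1 else 0)) \<le> min (real N) x"
  proof (induction N)
    case 0 then show ?case using assms by simp
  next
    case (Suc N) then show ?case by (auto simp: min_def split: if_splits)
  qed
  then show ?thesis by simp
qed

lemma trunc_sq_sum_le:
  fixes x :: real assumes x: "0 \<le> x"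
  shows "(\<Sum>t<K. (if x \<le> real t + 1 then x\<^sup>2 / (real t + 1)\<^sup>2 else 0)) \<le> 2 * x"
proof -
  have "(\<Sum>t<K. (if x \<le> real t + 1 then x\<^sup>2 / (real t + 1)\<^sup>2 else 0)) \<le> 2*x - 2*x\<^sup>2 / max (real K + 1) x"
  proof (induction K)
    case 0
    show ?case
    proof (cases "x \<le> 1")
      case True
      then have "2*x\<^sup>2 \<le> 2*x" using x by (simp add: power2_eq_square mult_left_le)
      then show ?thesis using True by simp
    next
      case False
      then show ?thesis by (simp add: power2_eq_square)
    qed
  next
    case (Suc K)
    show ?case
    proof (cases "x \<le> real K + 1")
      case True
      have m1: "max (real K + 1) x = real K + 1" using True by simp
      have m2: "max (real (Suc K) + 1) x = real K + 2" using True by simp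
      have key: "x\<^sup>2 / (real K + 1)\<^sup>2 \<le> 2*x\<^sup>2 / (real K + 1) - 2*x\<^sup>2/(real K + 2)"
      proof -
        have "2*x\<^sup>2 / (real K + 1) - 2*x\<^sup>2/(real K + 2) = 2*x\<^sup>2 / ((real K + 1)*(real K + 2))"
          by (simp add: field_simps)
        moreover have "x\<^sup>2 / (real K + 1)\<^sup>2 \<le> 2*x\<^sup>2 / ((real K + 1)*(real K + 2))"
        proof -
          have n: "x\<^sup>2 * (real K + 2) \<le> 2*x\<^sup>2 * (real K + 1)"
          proof -
            have "real K + 2 \<le> 2 * (real K + 1)" by simp
            then have "x\<^sup>2 * (real K + 2) \<le> x\<^sup>2 * (2 * (real K + 1))"
              by (rule mult_left_mono) simp
            then show ?thesis by (simp add: algebra_simps)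
          qed
          have e1: "x\<^sup>2 / (real K + 1)\<^sup>2 = (x\<^sup>2 * (real K + 2)) / ((real K + 1)\<^sup>2 * (real K + 2))"
            by simp
          have e2: "2*x\<^sup>2 / ((real K + 1)*(real K + 2)) = (2*x\<^sup>2 * (real K + 1)) / ((real K + 1)\<^sup>2 * (real K + 2))"
            by (simp add: power2_eq_square)
          show ?thesis unfolding e1 e2 by (rule divide_right_mono[OF n]) simp
        qed
        ultimately show ?thesis by simp
      qed
      have s: "(\<Sum>t<Suc K. (if x \<le> real t + 1 then x\<^sup>2 / (real t + 1)\<^sup>2 else 0))
         = (\<Sum>t<K. (if x \<le> real t + 1 then x\<^sup>2 / (real t + 1)\<^sup>2 else 0)) + x\<^sup>2 / (real K + 1)\<^sup>2"
        using True by simp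
      show ?thesis unfolding s m2 using Suc.IH[unfolded m1] key by linarith
    next
      case False
      have "max (real (Suc K) + 1) x \<ge> max (real K + 1) x" by simp
      then have "2*x\<^sup>2 / max (real (Suc K) + 1) x \<le> 2*x\<^sup>2 / max (real K + 1) x"
        by (intro divide_left_mono) auto
      then show ?thesis using Suc.IH False by simp
    qed
  qed
  also have "\<dots> \<le> 2*x" by simp
  finally show ?thesis .
qed

lemma floor_half:
  fixes y :: real assumes "1 \<le> y" shows "y / 2 \<le> real (nat \<lfloor>y\<rfloor>)"
proof (cases "y < 2")
  case True
  then have "\<lfloor>y\<rfloor> = 1" using assms by linarith
  then show ?thesis using True by simp
next
  case False
  then show ?thesis using assms by linarith
qed

lemma geom_count:
  fixes \<alpha> c :: real assumes a: "1 < \<alpha>" and c: "1 \<le> c"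
  shows "(\<Sum>m<M. (if c \<le> real (nat \<lfloor>\<alpha>^m\<rfloor>) then 1 / (real (nat \<lfloor>\<alpha>^m\<rfloor>))\<^sup>2 else 0))
           \<le> 4 / ((1 - 1/\<alpha>\<^sup>2) * c\<^sup>2)"
proof -
  define \<beta> where "\<beta> = 1/\<alpha>\<^sup>2"
  have b0: "0 < \<beta>" and b1: "\<beta> < 1" using a unfolding \<beta>_def by (auto simp: power2_eq_square divide_simps intro: less_1_mult)
  define G where "G M = (1/c\<^sup>2 - min (1/c\<^sup>2) (\<beta>^M)) / (1 - \<beta>)" for M
  have step: "(if c \<le> real (nat \<lfloor>\<alpha>^m\<rfloor>) then 1 / (real (nat \<lfloor>\<alpha>^m\<rfloor>))\<^sup>2 else 0) \<le> 4 * (G (Suc m) - G m)" for m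
  proof (cases "c \<le> real (nat \<lfloor>\<alpha>^m\<rfloor>)")
    case True
    have am: "1 \<le> \<alpha>^m" using a by (simp add: one_le_power)
    have fl: "real (nat \<lfloor>\<alpha>^m\<rfloor>) \<le> \<alpha>^m" using am by linarith
    have ca: "c \<le> \<alpha>^m" using True fl by linarith
    have bm: "\<beta>^m = 1/(\<alpha>^m)\<^sup>2" unfolding \<beta>_def by (simp add: power_one_over power_mult_distrib[symmetric] power_mult[symmetric] mult.commute)
    have sq: "c\<^sup>2 \<le> (\<alpha>^m)\<^sup>2" using ca c by (intro power_mono) auto
    have am0: "0 < \<alpha>^m" using am by linarith
    have pos: "0 < (\<alpha>^m)\<^sup>2 * c\<^sup>2" using c by (intro mult_pos_pos zero_less_power[OF am0]) auto
    have "1/(\<alpha>^m)\<^sup>2 \<le> 1/c\<^sup>2" by (rule divide_left_mono[OF sq _ pos]) simp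
    then have min1: "min (1/c\<^sup>2) (\<beta>^m) = \<beta>^m" using bm by simp
    have "\<beta>^(Suc m) \<le> \<beta>^m" using b0 b1 by (simp add: power_decreasing)
    then have min2: "min (1/c\<^sup>2) (\<beta>^Suc m) = \<beta>^Suc m" using min1 by simp
    have nz: "1 - \<beta> \<noteq> 0" using b1 by simp
    have "G (Suc m) - G m = (\<beta>^m - \<beta>^Suc m) / (1 - \<beta>)" unfolding G_def min1 min2
      by (simp add: diff_divide_distrib)
    also have "\<beta>^m - \<beta>^Suc m = \<beta>^m * (1 - \<beta>)" by (simp add: algebra_simps)
    finally have "G (Suc m) - G m = \<beta>^m" using nz by simp
    moreover have "1 / (real (nat \<lfloor>\<alpha>^m\<rfloor>))\<^sup>2 \<le> 4 / (\<alpha>^m)\<^sup>2"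
    proof -
      have h: "\<alpha>^m / 2 \<le> real (nat \<lfloor>\<alpha>^m\<rfloor>)" by (rule floor_half[OF am])
      have "(\<alpha>^m/2)\<^sup>2 \<le> (real (nat \<lfloor>\<alpha>^m\<rfloor>))\<^sup>2" by (rule power_mono[OF h]) (use am in simp)
      then have "1 / (real (nat \<lfloor>\<alpha>^m\<rfloor>))\<^sup>2 \<le> 1 / (\<alpha>^m/2)\<^sup>2" using am
        by (intro divide_left_mono) (auto simp: power2_eq_square)
      also have "\<dots> = 4 / (\<alpha>^m)\<^sup>2" by (simp add: power2_eq_square field_simps)
      finally show ?thesis .
    qed
    ultimately show ?thesis using True bm by simp
  next
    case False
    have "\<beta>^(Suc m) \<le> \<beta>^m" using b0 b1 by (simp add: power_decreasing)
    then have "min (1/c\<^sup>2) (\<beta>^Suc m) \<le> min (1/c\<^sup>2) (\<beta>^m)" by simp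
    then have "G m \<le> G (Suc m)" unfolding G_def using b1 by (intro divide_right_mono) auto
    then show ?thesis using False by simp
  qed
  have "(\<Sum>m<M. (if c \<le> real (nat \<lfloor>\<alpha>^m\<rfloor>) then 1 / (real (nat \<lfloor>\<alpha>^m\<rfloor>))\<^sup>2 else 0))
        \<le> (\<Sum>m<M. 4 * (G (Suc m) - G m))" by (intro sum_mono step)
  also have "\<dots> = 4 * (\<Sum>m<M. (G (Suc m) - G m))" by (simp add: sum_distrib_left)
  also have "(\<Sum>m<M. (G (Suc m) - G m)) = G M - G 0" by (rule sum_lessThan_telescope)
  also have "G 0 \<ge> 0" unfolding G_def using b1 by (intro divide_nonneg_pos) auto
  then have "4 * (G M - G 0) \<le> 4 * G M" by simp
  also have "G M \<le> (1/c\<^sup>2) / (1 - \<beta>)" unfolding G_def using b1 b0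
    by (intro divide_right_mono) auto
  finally show ?thesis unfolding \<beta>_def using c by (simp add: field_simps)
qed

definition kk :: "real \<Rightarrow> nat \<Rightarrow> nat" where "kk \<alpha> m = nat \<lfloor>\<alpha>^m\<rfloor>"

lemma kk_ge1: "1 < \<alpha> \<Longrightarrow> 1 \<le> kk \<alpha> m"
  unfolding kk_def by (simp add: one_le_power le_nat_floor)

lemma kk_mono: "1 < \<alpha> \<Longrightarrow> m \<le> m' \<Longrightarrow> kk \<alpha> m \<le> kk \<alpha> m'"
  unfolding kk_def by (intro nat_mono floor_mono power_increasing) auto

lemma kk_Suc: assumes "1 < \<alpha>" shows "real (kk \<alpha> (Suc m)) \<le> \<alpha> * real (kk \<alpha> m) + \<alpha>"
proof -
  have am: "1 \<le> \<alpha>^m" using assms by (simp add: one_le_power)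
  have "\<alpha>^m < real (kk \<alpha> m) + 1" unfolding kk_def using am by linarith
  then have "\<alpha> * \<alpha>^m \<le> \<alpha> * (real (kk \<alpha> m) + 1)" using assms by simp
  moreover have "real (kk \<alpha> (Suc m)) \<le> \<alpha>^Suc m" unfolding kk_def using am assms
    by (simp add: one_le_power)
  ultimately show ?thesis by (simp add: algebra_simps)
qed

lemma kk_unbounded: assumes "1 < \<alpha>" shows "filterlim (kk \<alpha>) at_top sequentially"
  unfolding filterlim_at_top
proof
  fix Z :: nat
  obtain m0 where "real Z + 1 < \<alpha>^m0" using real_arch_pow[OF assms] by blast
  then have "Z \<le> kk \<alpha> m0" unfolding kk_def by linarith
  then show "\<forall>\<^sub>F m in sequentially. Z \<le> kk \<alpha> m"
    unfolding eventually_sequentially using kk_mono[OF assms] le_trans by blast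
qed

lemma interp1:
  fixes T :: "nat \<Rightarrow> real" and \<alpha> \<mu> \<delta> :: real
  assumes mono: "\<And>n. T n \<le> T (Suc n)" and nn: "\<And>n. 0 \<le> T n"
    and a: "1 < \<alpha>" and d: "0 < \<delta>"
    and lim: "(\<lambda>m. T (kk \<alpha> m) / real (kk \<alpha> m)) \<longlonglongrightarrow> \<mu>"
  shows "eventually (\<lambda>n. T n / real n \<le> (\<mu> + \<delta>) * (\<alpha> + \<delta>) \<and> (\<mu> - \<delta>) / (\<alpha> + \<delta>) \<le> T n / real n) sequentially"
proof -
  have inc: "incseq T" using mono by (simp add: incseq_SucI)
  have e1: "eventually (\<lambda>m. \<bar>T (kk \<alpha> m) / real (kk \<alpha> m) - \<mu>\<bar> < \<delta>) sequentially"
    using LIMSEQ_D[OF lim d] unfolding eventually_sequentially by auto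
  have e2: "eventually (\<lambda>m. \<alpha> / \<delta> \<le> real (kk \<alpha> m)) sequentially"
  proof -
    obtain Z :: nat where "\<alpha> / \<delta> \<le> real Z" using real_arch_simple by blast
    moreover have "eventually (\<lambda>m. Z \<le> kk \<alpha> m) sequentially"
      using kk_unbounded[OF a] unfolding filterlim_at_top by auto
    ultimately show ?thesis by (auto elim: eventually_mono)
  qed
  obtain M0 where M0: "\<And>m. m \<ge> M0 \<Longrightarrow> \<bar>T (kk \<alpha> m) / real (kk \<alpha> m) - \<mu>\<bar> < \<delta> \<and> \<alpha> / \<delta> \<le> real (kk \<alpha> m)"
    using eventually_conj[OF e1 e2] unfolding eventually_sequentially by blast
  show ?thesis unfolding eventually_sequentially
  proof (intro exI[of _ "kk \<alpha> M0"] allI impI)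
    fix n assume n: "kk \<alpha> M0 \<le> n"
    have ex: "\<exists>m. n < kk \<alpha> m"
      using kk_unbounded[OF a] unfolding filterlim_at_top eventually_sequentially
      by (metis Suc_le_eq le_refl)
    define m' where "m' = (LEAST m. n < kk \<alpha> m)"
    have m'1: "n < kk \<alpha> m'" unfolding m'_def by (rule LeastI_ex[OF ex])
    have m'2: "\<And>m. m < m' \<Longrightarrow> kk \<alpha> m \<le> n" unfolding m'_def using not_less_Least by (metis not_less)
    have "M0 < m'"
    proof (rule ccontr)
      assume "\<not> M0 < m'"
      then have "kk \<alpha> m' \<le> kk \<alpha> M0" using kk_mono[OF a] by simp
      then show False using m'1 n by simp
    qed
    define m where "m = m' - 1"
    have mM: "M0 \<le> m" and sm: "Suc m = m'" using \<open>M0 < m'\<close> unfolding m_def by auto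
    have kmn: "kk \<alpha> m \<le> n" using m'2 sm by auto
    have nk: "n < kk \<alpha> (Suc m)" using m'1 sm by simp
    have k1: "1 \<le> real (kk \<alpha> m)" using kk_ge1[OF a] by simp
    have k1': "1 \<le> real (kk \<alpha> (Suc m))" using kk_ge1[OF a] by simp
    have npos: "0 < real n" using kmn k1 by simp
    have A1: "\<bar>T (kk \<alpha> m) / real (kk \<alpha> m) - \<mu>\<bar> < \<delta>" and A2: "\<alpha> / \<delta> \<le> real (kk \<alpha> m)"
      using M0[OF mM] by auto
    have B1: "\<bar>T (kk \<alpha> (Suc m)) / real (kk \<alpha> (Suc m)) - \<mu>\<bar> < \<delta>" using M0[of "Suc m"] mM by auto
    have ratio: "real (kk \<alpha> (Suc m)) \<le> (\<alpha> + \<delta>) * real (kk \<alpha> m)"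
    proof -
      have "\<alpha> \<le> \<delta> * real (kk \<alpha> m)" using A2 d by (simp add: divide_le_eq mult.commute)
      then show ?thesis using kk_Suc[OF a, of m] by (simp add: algebra_simps)
    qed
    have Tup: "T n \<le> T (kk \<alpha> (Suc m))" using inc nk by (simp add: incseqD)
    have Tlo: "T (kk \<alpha> m) \<le> T n" using inc kmn by (simp add: incseqD)
    have up: "T n / real n \<le> (\<mu> + \<delta>) * (\<alpha> + \<delta>)"
    proof -
      have "T n / real n \<le> T (kk \<alpha> (Suc m)) / real (kk \<alpha> m)"
        using Tup kmn k1 nn[of n] nn[of "kk \<alpha> (Suc m)"]
        by (intro frac_le) auto
      also have "\<dots> = (T (kk \<alpha> (Suc m)) / real (kk \<alpha> (Suc m))) * (real (kk \<alpha> (Suc m)) / real (kk \<alpha> m))"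
        using k1 k1' by simp
      also have "\<dots> \<le> (\<mu> + \<delta>) * (\<alpha> + \<delta>)"
      proof (rule mult_mono)
        show "T (kk \<alpha> (Suc m)) / real (kk \<alpha> (Suc m)) \<le> \<mu> + \<delta>" using B1 by simp
        show "real (kk \<alpha> (Suc m)) / real (kk \<alpha> m) \<le> \<alpha> + \<delta>" using ratio k1 by (simp add: divide_le_eq)
        have "0 \<le> T (kk \<alpha> (Suc m)) / real (kk \<alpha> (Suc m))" using nn by simp
        then show "0 \<le> \<mu> + \<delta>" using B1 by linarith
        show "0 \<le> real (kk \<alpha> (Suc m)) / real (kk \<alpha> m)" by simp
      qed
      finally show ?thesis .
    qed
    have lo: "(\<mu> - \<delta>) / (\<alpha> + \<delta>) \<le> T n / real n"
    proof (cases "\<mu> - \<delta> \<le> 0")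
      case True
      then have "(\<mu> - \<delta>) / (\<alpha> + \<delta>) \<le> 0" using a d by (simp add: divide_nonpos_pos)
      also have "0 \<le> T n / real n" using nn by simp
      finally show ?thesis .
    next
      case False
      have q: "\<mu> - \<delta> \<le> T (kk \<alpha> m) / real (kk \<alpha> m)" using A1 by simp
      have "(\<mu> - \<delta>) / (\<alpha> + \<delta>) \<le> (T (kk \<alpha> m) / real (kk \<alpha> m)) / (real (kk \<alpha> (Suc m)) / real (kk \<alpha> m))"
      proof (rule frac_le)
        show "0 \<le> T (kk \<alpha> m) / real (kk \<alpha> m)" using nn by simp
        show "\<mu> - \<delta> \<le> T (kk \<alpha> m) / real (kk \<alpha> m)" by (rule q)
        show "0 < real (kk \<alpha> (Suc m)) / real (kk \<alpha> m)" using k1 k1' by simp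
        show "real (kk \<alpha> (Suc m)) / real (kk \<alpha> m) \<le> \<alpha> + \<delta>" using ratio k1 by (simp add: divide_le_eq)
      qed
      also have "\<dots> = T (kk \<alpha> m) / real (kk \<alpha> (Suc m))" using k1 k1' by simp
      also have "\<dots> \<le> T n / real n"
        using Tlo nk npos nn[of "kk \<alpha> m"] by (intro frac_le) auto
      finally show ?thesis .
    qed
    show "T n / real n \<le> (\<mu> + \<delta>) * (\<alpha> + \<delta>) \<and> (\<mu> - \<delta>) / (\<alpha> + \<delta>) \<le> T n / real n"
      using up lo by simp
  qed
qed

lemma interp:
  fixes T :: "nat \<Rightarrow> real"
  assumes mono: "\<And>n. T n \<le> T (Suc n)" and nn: "\<And>n. 0 \<le> T n"
    and lim: "\<And>j. (\<lambda>m. T (kk (1 + 1 / real (Suc j)) m) / real (kk (1 + 1 / real (Suc j)) m)) \<longlonglongrightarrow> \<mu>"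
  shows "(\<lambda>n. T n / real n) \<longlonglongrightarrow> \<mu>"
proof (rule LIMSEQ_I)
  fix r :: real assume r: "0 < r"
  define U where "U j = (\<mu> + 1 / real (Suc j)) * ((1 + 1 / real (Suc j)) + 1 / real (Suc j))" for j
  define L where "L j = (\<mu> - 1 / real (Suc j)) / ((1 + 1 / real (Suc j)) + 1 / real (Suc j))" for j
  have z: "(\<lambda>j. 1 / real (Suc j)) \<longlonglongrightarrow> 0"
    using LIMSEQ_inverse_real_of_nat by (simp add: inverse_eq_divide)
  have U: "U \<longlonglongrightarrow> (\<mu> + 0) * ((1 + 0) + 0)" unfolding U_def by (intro tendsto_intros z)
  have L: "L \<longlonglongrightarrow> (\<mu> - 0) / ((1 + 0) + 0)" unfolding L_def by (intro tendsto_intros z) simp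
  obtain j where j1: "\<bar>U j - \<mu>\<bar> < r" and j2: "\<bar>L j - \<mu>\<bar> < r"
  proof -
    have "eventually (\<lambda>j. \<bar>U j - \<mu>\<bar> < r) sequentially" using LIMSEQ_D[OF U r] unfolding eventually_sequentially by auto
    moreover have "eventually (\<lambda>j. \<bar>L j - \<mu>\<bar> < r) sequentially" using LIMSEQ_D[OF L r] unfolding eventually_sequentially by auto
    ultimately have "eventually (\<lambda>j. \<bar>U j - \<mu>\<bar> < r \<and> \<bar>L j - \<mu>\<bar> < r) sequentially" by (rule eventually_conj)
    then obtain N0 where "\<And>j. j \<ge> N0 \<Longrightarrow> \<bar>U j - \<mu>\<bar> < r \<and> \<bar>L j - \<mu>\<bar> < r"
      unfolding eventually_sequentially by blast
    then show ?thesis using that by blast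
  qed
  have a: "1 < 1 + 1 / real (Suc j)" by simp
  have d: "0 < 1 / real (Suc j)" by simp
  from interp1[OF mono nn a d lim[of j]]
  obtain N where N: "\<And>n. n \<ge> N \<Longrightarrow> T n / real n \<le> U j \<and> L j \<le> T n / real n"
    unfolding eventually_sequentially U_def L_def by blast
  show "\<exists>no. \<forall>n\<ge>no. norm (T n / real n - \<mu>) < r"
  proof (intro exI[of _ N] allI impI)
    fix n assume "N \<le> n"
    from N[OF this] have "T n / real n \<le> U j" "L j \<le> T n / real n" by auto
    with j1 j2 show "norm (T n / real n - \<mu>) < r" unfolding real_norm_def by linarith
  qed
qed

lemma swap_bound:
  fixes a :: "nat \<Rightarrow> real"
  assumes al: "1 < \<alpha>" and e: "0 < \<epsilon>" and a0: "\<And>t. 0 \<le> a t"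
    and B: "\<And>K. (\<Sum>t<K. a t / (real t + 1)\<^sup>2) \<le> B"
  shows "(\<Sum>m<M. (\<Sum>t<kk \<alpha> m. a t) / (\<epsilon> * real (kk \<alpha> m))\<^sup>2) \<le> (1/\<epsilon>\<^sup>2) * (4/(1 - 1/\<alpha>\<^sup>2)) * B"
proof -
  define K where "K = kk \<alpha> M"
  define C where "C = 4/(1 - 1/\<alpha>\<^sup>2)"
  have C0: "0 \<le> C"
  proof -
    have "1 < \<alpha>\<^sup>2" using al by (simp add: power2_eq_square less_1_mult)
    then have "1/\<alpha>\<^sup>2 < 1" by (simp add: divide_less_eq)
    then show ?thesis unfolding C_def by simp
  qed
  have kK: "m < M \<Longrightarrow> kk \<alpha> m \<le> K" for m unfolding K_def using kk_mono[OF al] by simp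
  have step1: "(\<Sum>t<kk \<alpha> m. a t) / (\<epsilon> * real (kk \<alpha> m))\<^sup>2
      = (1/\<epsilon>\<^sup>2) * (\<Sum>t<K. a t * (if t < kk \<alpha> m then 1 / (real (kk \<alpha> m))\<^sup>2 else 0))" if m: "m < M" for m
  proof -
    have "(\<Sum>t<K. a t * (if t < kk \<alpha> m then 1 / (real (kk \<alpha> m))\<^sup>2 else 0))
        = (\<Sum>t<K. (if t < kk \<alpha> m then a t / (real (kk \<alpha> m))\<^sup>2 else 0))"
      by (intro sum.cong) auto
    also have "\<dots> = (\<Sum>t\<in>{t\<in>{..<K}. t < kk \<alpha> m}. a t / (real (kk \<alpha> m))\<^sup>2)"
      by (rule sum.inter_filter[symmetric]) simp
    also have "{t\<in>{..<K}. t < kk \<alpha> m} = {..<kk \<alpha> m}" using kK[OF m] by auto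
    also have "(\<Sum>t<kk \<alpha> m. a t / (real (kk \<alpha> m))\<^sup>2) = (\<Sum>t<kk \<alpha> m. a t) / (real (kk \<alpha> m))\<^sup>2"
      by (simp add: sum_divide_distrib)
    finally show ?thesis by (simp add: power_mult_distrib)
  qed
  have eq0: "(\<Sum>m<M. (\<Sum>t<kk \<alpha> m. a t) / (\<epsilon> * real (kk \<alpha> m))\<^sup>2)
      = (1/\<epsilon>\<^sup>2) * (\<Sum>m<M. \<Sum>t<K. a t * (if t < kk \<alpha> m then 1 / (real (kk \<alpha> m))\<^sup>2 else 0))"
    using step1 by (simp add: sum_distrib_left)
  have "(\<Sum>m<M. \<Sum>t<K. a t * (if t < kk \<alpha> m then 1 / (real (kk \<alpha> m))\<^sup>2 else 0))
      = (\<Sum>t<K. a t * (\<Sum>m<M. (if real t + 1 \<le> real (kk \<alpha> m) then 1 / (real (kk \<alpha> m))\<^sup>2 else 0)))"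
    by (subst sum.swap) (auto simp: sum_distrib_left intro!: sum.cong)
  also have "\<dots> \<le> (\<Sum>t<K. a t * (C / (real t + 1)\<^sup>2))"
  proof (rule sum_mono, rule mult_left_mono[OF _ a0])
    fix t
    have "(\<Sum>m<M. (if real t + 1 \<le> real (kk \<alpha> m) then 1 / (real (kk \<alpha> m))\<^sup>2 else 0))
          \<le> 4 / ((1 - 1/\<alpha>\<^sup>2) * (real t + 1)\<^sup>2)" unfolding kk_def by (rule geom_count[OF al]) simp
    then show "(\<Sum>m<M. (if real t + 1 \<le> real (kk \<alpha> m) then 1 / (real (kk \<alpha> m))\<^sup>2 else 0)) \<le> C / (real t + 1)\<^sup>2"
      unfolding C_def by simp
  qed
  also have "\<dots> = C * (\<Sum>t<K. a t / (real t + 1)\<^sup>2)" by (simp add: sum_distrib_left mult.commute)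
  also have "\<dots> \<le> C * B" by (rule mult_left_mono[OF B C0])
  finally have "(\<Sum>m<M. \<Sum>t<K. a t * (if t < kk \<alpha> m then 1 / (real (kk \<alpha> m))\<^sup>2 else 0)) \<le> C * B" .
  then have "(\<Sum>m<M. (\<Sum>t<kk \<alpha> m. a t) / (\<epsilon> * real (kk \<alpha> m))\<^sup>2) \<le> (1/\<epsilon>\<^sup>2) * (C * B)"
    unfolding eq0 by (rule mult_left_mono) simp
  then show ?thesis unfolding C_def by simp
qed

locale iid_nn = prob_space M for M :: "'a measure" +
  fixes X :: "nat \<Rightarrow> 'a \<Rightarrow> real"
  assumes ind: "indep_vars (\<lambda>_. borel) X UNIV"
    and idd: "\<And>t. distr M borel (X t) = distr M borel (X 0)"
    and int0: "integrable M (X 0)"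
    and nn: "\<And>t w. 0 \<le> X t w"
begin

lemma rv[measurable]: "X t \<in> borel_measurable M"
  using ind unfolding indep_vars_def by auto

lemma idint: fixes g :: "real \<Rightarrow> real" assumes [measurable]: "g \<in> borel_measurable borel"
  shows "integral\<^sup>L M (\<lambda>w. g (X t w)) = integral\<^sup>L M (\<lambda>w. g (X 0 w))"
  by (metis integral_distr[OF rv assms] idd)

lemma idintg: fixes g :: "real \<Rightarrow> real" assumes [measurable]: "g \<in> borel_measurable borel"
  shows "integrable M (\<lambda>w. g (X t w)) \<longleftrightarrow> integrable M (\<lambda>w. g (X 0 w))"
  by (metis integrable_distr_eq[OF rv assms] idd)

definition tr :: "nat \<Rightarrow> real \<Rightarrow> real" where "tr t x = (if x \<le> real t + 1 then x else 0)"

lemma tr_meas[measurable]: "tr t \<in> borel_measurable borel"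
  unfolding tr_def by measurable

lemma bint: fixes f :: "'a \<Rightarrow> real"
  assumes "f \<in> borel_measurable M" "\<And>w. w \<in> space M \<Longrightarrow> \<bar>f w\<bar> \<le> B" shows "integrable M f"
  using assms by (intro integrable_const_bound[where B=B]) auto

lemma tr_bd: "0 \<le> tr t (X t w)" "tr t (X t w) \<le> real t + 1"
  using nn[of t w] unfolding tr_def by auto

lemma int_X: "integrable M (X t)"
  using idintg[of "\<lambda>x. x" t] int0 by simp

lemma stepA: "AE w in M. eventually (\<lambda>t. tr t (X t w) = X t w) sequentially"
proof -
  define A where "A t = {w\<in>space M. real t + 1 < X t w}" for t
  have Am[measurable]: "A t \<in> sets M" for t unfolding A_def by measurable
  have pA: "measure M (A t) = expectation (\<lambda>w. indicator {real t + 1<..} (X 0 w))" for t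
  proof -
    have "measure M (A t) = integral\<^sup>L M (indicator (A t))"
      using sets.sets_into_space[OF Am[of t]] by (simp add: Int_absorb2)
    also have "\<dots> = integral\<^sup>L M (\<lambda>w. indicator {real t + 1<..} (X t w))"
      by (rule Bochner_Integration.integral_cong) (auto simp: A_def indicator_def)
    also have "\<dots> = expectation (\<lambda>w. indicator {real t + 1<..} (X 0 w))"
      by (rule idint) measurable
    finally show ?thesis .
  qed
  have iint: "integrable M (\<lambda>w. indicator {real t + 1<..} (X 0 w) :: real)" for t
    by (rule bint[where B=1]) (auto simp: indicator_def)
  have summ: "summable (\<lambda>t. measure M (A t))"
  proof (rule summableI_nonneg_bounded)
    show "0 \<le> measure M (A t)" for t by simp
    fix n
    have "(\<Sum>t<n. measure M (A t)) = expectation (\<lambda>w. \<Sum>t<n. indicator {real t + 1<..} (X 0 w))"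
      unfolding pA using iint by (simp add: integral_sum)
    also have "\<dots> \<le> expectation (X 0)"
    proof (rule integral_mono'[OF int0])
      fix w assume "w \<in> space M"
      have "(\<Sum>t<n. indicator {real t + 1<..} (X 0 w) :: real) = (\<Sum>t<n. (if real t + 1 < X 0 w then 1 else 0))"
        by (intro sum.cong) (auto simp: indicator_def)
      also have "\<dots> \<le> X 0 w" by (rule count_le[OF nn])
      finally show "(\<Sum>t<n. indicator {real t + 1<..} (X 0 w) :: real) \<le> X 0 w" .
      show "0 \<le> X 0 w" by (rule nn)
    qed
    finally show "(\<Sum>t<n. measure M (A t)) \<le> expectation (X 0)" .
  qed
  have "AE w in M. eventually (\<lambda>t. w \<in> space M - A t) sequentially"
    by (rule borel_cantelli_AE1[OF Am _ summ]) (simp add: emeasure_eq_measure)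
  then show ?thesis
  proof (rule AE_mp, intro AE_I2 impI)
    fix w assume "w \<in> space M" "eventually (\<lambda>t. w \<in> space M - A t) sequentially"
    then show "eventually (\<lambda>t. tr t (X t w) = X t w) sequentially"
      by (elim eventually_mono) (auto simp: A_def tr_def)
  qed
qed

lemma Y_meas[measurable]: "(\<lambda>w. tr t (X t w)) \<in> borel_measurable M" by measurable

lemma int_Y: "integrable M (\<lambda>w. tr t (X t w))"
  by (rule bint[where B="real t + 1"]) (use tr_bd in auto)

lemma int_Y2: "integrable M (\<lambda>w. (tr t (X t w))\<^sup>2)"
proof (rule bint[where B="(real t + 1)^2"])
  fix w show "\<bar>(tr t (X t w))\<^sup>2\<bar> \<le> (real t + 1)^2"
    using tr_bd[of t w] by (simp add: power_mono)
qed measurable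

lemma stepB: "(\<lambda>t. expectation (\<lambda>w. tr t (X t w))) \<longlonglongrightarrow> expectation (X 0)"
proof -
  have eq: "expectation (\<lambda>w. tr t (X t w)) = expectation (\<lambda>w. tr t (X 0 w))" for t
    by (rule idint) measurable
  have "(\<lambda>t. expectation (\<lambda>w. tr t (X 0 w))) \<longlonglongrightarrow> expectation (X 0)"
  proof (rule integral_dominated_convergence[where w="X 0"])
    show "AE w in M. (\<lambda>t. tr t (X 0 w)) \<longlonglongrightarrow> X 0 w"
    proof (intro AE_I2 tendsto_eventually)
      fix w
      obtain N :: nat where "X 0 w \<le> real N" using real_arch_simple by blast
      then show "eventually (\<lambda>t. tr t (X 0 w) = X 0 w) sequentially"
        unfolding eventually_sequentially tr_def by (intro exI[of _ N]) auto
    qed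
    show "AE w in M. norm (tr t (X 0 w)) \<le> X 0 w" for t
      using nn[of 0] by (intro AE_I2) (auto simp: tr_def)
  qed (use int0 in auto)
  then show ?thesis unfolding eq .
qed

definition TT :: "nat \<Rightarrow> 'a \<Rightarrow> real" where "TT n w = (\<Sum>t<n. tr t (X t w))"

lemma TT_meas[measurable]: "TT n \<in> borel_measurable M" unfolding TT_def by measurable

lemma ETT: "expectation (TT n) = (\<Sum>t<n. expectation (\<lambda>w. tr t (X t w)))"
  unfolding TT_def using int_Y by (simp add: integral_sum)

lemma ETT_lim: "(\<lambda>n. expectation (TT n) / real n) \<longlonglongrightarrow> expectation (X 0)"
  unfolding ETT by (rule cesaro[OF stepB])

definition mm :: "nat \<Rightarrow> real" where "mm t = expectation (\<lambda>w. tr t (X t w))"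

lemma cross:
  assumes st: "s \<noteq> t"
  shows "expectation (\<lambda>w. (tr s (X s w) - mm s) * (tr t (X t w) - mm t)) = 0"
proof -
  define Z where "Z i w = tr i (X i w) - mm i" for i w
  have "indep_vars (\<lambda>_. borel) (\<lambda>i w. (\<lambda>x. tr i x - mm i) (X i w)) UNIV"
    by (rule indep_vars_compose2[OF ind]) measurable
  then have "indep_vars (\<lambda>_. borel) Z {s, t}"
    unfolding Z_def by (rule indep_vars_subset) auto
  moreover have iZ: "integrable M (Z i)" for i
    unfolding Z_def using int_Y by simp
  ultimately have "expectation (\<lambda>w. \<Prod>i\<in>{s,t}. Z i w) = (\<Prod>i\<in>{s,t}. expectation (Z i))"
    by (intro indep_vars_lebesgue_integral) auto
  moreover have "expectation (Z i) = 0" for i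
    unfolding Z_def mm_def using int_Y by (simp add: prob_space)
  ultimately show ?thesis using st unfolding Z_def by simp
qed

lemma int_c2: "integrable M (\<lambda>w. (tr s (X s w) - mm s) * (tr t (X t w) - mm t))"
proof (rule bint[where B="(real s + 1 + \<bar>mm s\<bar>) * (real t + 1 + \<bar>mm t\<bar>)"])
  fix w
  have a: "\<bar>tr s (X s w) - mm s\<bar> \<le> real s + 1 + \<bar>mm s\<bar>" using tr_bd[of s w] by linarith
  have b: "\<bar>tr t (X t w) - mm t\<bar> \<le> real t + 1 + \<bar>mm t\<bar>" using tr_bd[of t w] by linarith
  show "\<bar>(tr s (X s w) - mm s) * (tr t (X t w) - mm t)\<bar> \<le> (real s + 1 + \<bar>mm s\<bar>) * (real t + 1 + \<bar>mm t\<bar>)"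
    unfolding abs_mult by (rule mult_mono[OF a b]) auto
qed measurable

lemma var_sum: "expectation (\<lambda>w. (TT n w - expectation (TT n))\<^sup>2) = (\<Sum>t<n. expectation (\<lambda>w. (tr t (X t w) - mm t)\<^sup>2))"
proof -
  define c where "c t w = tr t (X t w) - mm t" for t w
  have e1: "TT n w - expectation (TT n) = (\<Sum>t<n. c t w)" for w
    unfolding TT_def ETT c_def mm_def by (simp add: sum_subtractf)
  have e2: "(\<Sum>t<n. c t w)\<^sup>2 = (\<Sum>s<n. \<Sum>t<n. c s w * c t w)" for w
    by (simp add: power2_eq_square sum_product)
  have ic: "integrable M (\<lambda>w. c s w * c t w)" for s t unfolding c_def by (rule int_c2)
  have "expectation (\<lambda>w. (TT n w - expectation (TT n))\<^sup>2) = (\<Sum>s<n. \<Sum>t<n. expectation (\<lambda>w. c s w * c t w))"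
    unfolding e1 e2 using ic by (simp add: integral_sum integrable_sum)
  also have "\<dots> = (\<Sum>s<n. expectation (\<lambda>w. c s w * c s w))"
  proof (rule sum.cong[OF refl])
    fix s assume s: "s \<in> {..<n}"
    have "(\<Sum>t<n. expectation (\<lambda>w. c s w * c t w)) = expectation (\<lambda>w. c s w * c s w) + (\<Sum>t\<in>{..<n}-{s}. expectation (\<lambda>w. c s w * c t w))"
      using s by (simp add: sum.remove)
    also have "(\<Sum>t\<in>{..<n}-{s}. expectation (\<lambda>w. c s w * c t w)) = 0"
      by (intro sum.neutral) (auto simp: c_def cross)
    finally show "(\<Sum>t<n. expectation (\<lambda>w. c s w * c t w)) = expectation (\<lambda>w. c s w * c s w)" by simp
  qed
  finally show ?thesis unfolding c_def by (simp add: power2_eq_square)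
qed

lemma var_le: "expectation (\<lambda>w. (tr t (X t w) - mm t)\<^sup>2) \<le> expectation (\<lambda>w. (tr t (X t w))\<^sup>2)"
proof -
  have "expectation (\<lambda>w. (tr t (X t w) - mm t)\<^sup>2)
      = expectation (\<lambda>w. (tr t (X t w))\<^sup>2 - 2 * mm t * tr t (X t w) + (mm t)\<^sup>2)"
    by (simp add: power2_eq_square algebra_simps)
  also have "\<dots> = expectation (\<lambda>w. (tr t (X t w))\<^sup>2) - 2 * mm t * mm t + (mm t)\<^sup>2"
    using int_Y[of t] int_Y2[of t] unfolding mm_def by (simp add: prob_space)
  also have "\<dots> \<le> expectation (\<lambda>w. (tr t (X t w))\<^sup>2)" by (simp add: power2_eq_square)
  finally show ?thesis .
qed

lemma int_Y0sq: "integrable M (\<lambda>w. (tr t (X 0 w))\<^sup>2)"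
  using int_Y2[of t] idintg[of "\<lambda>x. (tr t x)\<^sup>2" t] by simp

lemma EY2: "expectation (\<lambda>w. (tr t (X t w))\<^sup>2) = expectation (\<lambda>w. (tr t (X 0 w))\<^sup>2)"
  by (rule idint) measurable

lemma sq_bound: "(\<Sum>t<K. expectation (\<lambda>w. (tr t (X 0 w))\<^sup>2) / (real t + 1)\<^sup>2) \<le> 2 * expectation (X 0)"
proof -
  have "(\<Sum>t<K. expectation (\<lambda>w. (tr t (X 0 w))\<^sup>2) / (real t + 1)\<^sup>2)
      = expectation (\<lambda>w. \<Sum>t<K. (tr t (X 0 w))\<^sup>2 / (real t + 1)\<^sup>2)"
    using int_Y0sq by (simp add: integral_sum)
  also have "\<dots> \<le> expectation (\<lambda>w. 2 * X 0 w)"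
  proof (rule integral_mono')
    show "integrable M (\<lambda>w. 2 * X 0 w)" using int0 by simp
    fix w
    have "(\<Sum>t<K. (tr t (X 0 w))\<^sup>2 / (real t + 1)\<^sup>2) = (\<Sum>t<K. (if X 0 w \<le> real t + 1 then (X 0 w)\<^sup>2 / (real t + 1)\<^sup>2 else 0))"
      by (intro sum.cong) (auto simp: tr_def)
    also have "\<dots> \<le> 2 * X 0 w" by (rule trunc_sq_sum_le[OF nn])
    finally show "(\<Sum>t<K. (tr t (X 0 w))\<^sup>2 / (real t + 1)\<^sup>2) \<le> 2 * X 0 w" .
    show "0 \<le> 2 * X 0 w" using nn[of 0 w] by simp
  qed
  also have "\<dots> = 2 * expectation (X 0)" by simp
  finally show ?thesis .
qed

lemma TT_bd: "\<bar>TT n w\<bar> \<le> (\<Sum>t<n. real t + 1)"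
  unfolding TT_def using tr_bd by (intro order_trans[OF sum_abs] sum_mono) auto

lemma stepC:
  assumes al: "1 < \<alpha>" and e: "0 < \<epsilon>"
  shows "AE w in M. eventually (\<lambda>m. \<bar>TT (kk \<alpha> m) w - expectation (TT (kk \<alpha> m))\<bar> < \<epsilon> * real (kk \<alpha> m)) sequentially"
proof -
  define A where "A m = {w\<in>space M. \<epsilon> * real (kk \<alpha> m) \<le> \<bar>TT (kk \<alpha> m) w - expectation (TT (kk \<alpha> m))\<bar>}" for m
  have Am[measurable]: "A m \<in> sets M" for m unfolding A_def by measurable
  define a where "a t = expectation (\<lambda>w. (tr t (X 0 w))\<^sup>2)" for t
  have a0: "0 \<le> a t" for t unfolding a_def by (rule integral_nonneg_AE) auto
  have pA: "measure M (A m) \<le> (\<Sum>t<kk \<alpha> m. a t) / (\<epsilon> * real (kk \<alpha> m))\<^sup>2" for m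
  proof -
    let ?k = "kk \<alpha> m"
    have kpos: "0 < \<epsilon> * real ?k" using kk_ge1[OF al, of m] e by simp
    have i2: "integrable M (\<lambda>x. (TT ?k x)^2)"
    proof (rule bint[where B="(\<Sum>t<?k. real t + 1)^2"])
      fix w
      have "\<bar>TT ?k w\<bar>^2 \<le> (\<Sum>t<?k. real t + 1)^2" by (rule power_mono[OF TT_bd abs_ge_zero])
      then show "\<bar>(TT ?k w)^2\<bar> \<le> (\<Sum>t<?k. real t + 1)^2" by simp
    qed measurable
    have "measure M (A m) \<le> variance (TT ?k) / (\<epsilon> * real ?k)\<^sup>2"
      unfolding A_def by (rule Chebyshev_inequality[OF _ i2 kpos]) measurable
    also have "variance (TT ?k) \<le> (\<Sum>t<?k. a t)"
      unfolding var_sum a_def EY2[symmetric] by (intro sum_mono var_le)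
    then have "variance (TT ?k) / (\<epsilon> * real ?k)\<^sup>2 \<le> (\<Sum>t<?k. a t) / (\<epsilon> * real ?k)\<^sup>2"
      by (intro divide_right_mono) auto
    finally show ?thesis .
  qed
  have summ: "summable (\<lambda>m. measure M (A m))"
  proof (rule summableI_nonneg_bounded)
    show "0 \<le> measure M (A m)" for m by simp
    fix M' :: nat
    have "(\<Sum>m<M'. measure M (A m)) \<le> (\<Sum>m<M'. (\<Sum>t<kk \<alpha> m. a t) / (\<epsilon> * real (kk \<alpha> m))\<^sup>2)"
      by (intro sum_mono pA)
    also have "\<dots> \<le> (1/\<epsilon>\<^sup>2) * (4/(1 - 1/\<alpha>\<^sup>2)) * (2 * expectation (X 0))"
      by (rule swap_bound[OF al e a0]) (unfold a_def, rule sq_bound)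
    finally show "(\<Sum>m<M'. measure M (A m)) \<le> (1/\<epsilon>\<^sup>2) * (4/(1 - 1/\<alpha>\<^sup>2)) * (2 * expectation (X 0))" .
  qed
  have "AE w in M. eventually (\<lambda>m. w \<in> space M - A m) sequentially"
    by (rule borel_cantelli_AE1[OF Am _ summ]) (simp add: emeasure_eq_measure)
  then show ?thesis
  proof (rule AE_mp, intro AE_I2 impI)
    fix w assume "w \<in> space M" "eventually (\<lambda>m. w \<in> space M - A m) sequentially"
    then show "eventually (\<lambda>m. \<bar>TT (kk \<alpha> m) w - expectation (TT (kk \<alpha> m))\<bar> < \<epsilon> * real (kk \<alpha> m)) sequentially"
      by (elim eventually_mono) (auto simp: A_def)
  qed
qed

lemma TT_Suc: "TT (Suc n) w = TT n w + tr n (X n w)" unfolding TT_def by simp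

lemma sub_lim:
  assumes al: "1 < \<alpha>"
    and H: "\<forall>i. eventually (\<lambda>m. \<bar>TT (kk \<alpha> m) w - expectation (TT (kk \<alpha> m))\<bar> < (1 / real (Suc i)) * real (kk \<alpha> m)) sequentially"
  shows "(\<lambda>m. TT (kk \<alpha> m) w / real (kk \<alpha> m)) \<longlonglongrightarrow> expectation (X 0)"
proof -
  have e: "(\<lambda>m. expectation (TT (kk \<alpha> m)) / real (kk \<alpha> m)) \<longlonglongrightarrow> expectation (X 0)"
    using filterlim_compose[OF ETT_lim kk_unbounded[OF al]] .
  have d: "(\<lambda>m. TT (kk \<alpha> m) w / real (kk \<alpha> m) - expectation (TT (kk \<alpha> m)) / real (kk \<alpha> m)) \<longlonglongrightarrow> 0"
  proof (rule LIMSEQ_I)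
    fix r :: real assume r: "0 < r"
    obtain i where i: "1 / real (Suc i) < r"
      using reals_Archimedean[OF r] by (auto simp: inverse_eq_divide)
    from H[rule_format, of i] obtain N where N: "\<And>m. m \<ge> N \<Longrightarrow> \<bar>TT (kk \<alpha> m) w - expectation (TT (kk \<alpha> m))\<bar> < (1 / real (Suc i)) * real (kk \<alpha> m)"
      unfolding eventually_sequentially by blast
    show "\<exists>no. \<forall>m\<ge>no. norm (TT (kk \<alpha> m) w / real (kk \<alpha> m) - expectation (TT (kk \<alpha> m)) / real (kk \<alpha> m) - 0) < r"
    proof (intro exI[of _ N] allI impI)
      fix m assume "N \<le> m"
      note b = N[OF this]
      have kp: "0 < real (kk \<alpha> m)" using kk_ge1[OF al, of m] by simp
      have "norm (TT (kk \<alpha> m) w / real (kk \<alpha> m) - expectation (TT (kk \<alpha> m)) / real (kk \<alpha> m) - 0)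
          = \<bar>TT (kk \<alpha> m) w - expectation (TT (kk \<alpha> m))\<bar> / real (kk \<alpha> m)"
        by (simp add: diff_divide_distrib[symmetric])
      also have "\<dots> < 1 / real (Suc i)" using b kp by (simp add: divide_less_eq)
      finally show "norm (TT (kk \<alpha> m) w / real (kk \<alpha> m) - expectation (TT (kk \<alpha> m)) / real (kk \<alpha> m) - 0) < r"
        using i by simp
    qed
  qed
  have "(\<lambda>m. (TT (kk \<alpha> m) w / real (kk \<alpha> m) - expectation (TT (kk \<alpha> m)) / real (kk \<alpha> m))
        + expectation (TT (kk \<alpha> m)) / real (kk \<alpha> m)) \<longlonglongrightarrow> 0 + expectation (X 0)"
    by (rule tendsto_add[OF d e])
  then show ?thesis by simp
qed

theorem slln_nn: "AE w in M. (\<lambda>n. (\<Sum>t<n. X t w) / real n) \<longlonglongrightarrow> expectation (X 0)"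
proof -
  define al where "al j = 1 + 1 / real (Suc j)" for j
  have al1: "1 < al j" for j unfolding al_def by simp
  have C: "AE w in M. \<forall>j i. eventually (\<lambda>m. \<bar>TT (kk (al j) m) w - expectation (TT (kk (al j) m))\<bar> < (1 / real (Suc i)) * real (kk (al j) m)) sequentially"
    unfolding AE_all_countable
  proof (intro allI)
    fix j i
    show "AE w in M. eventually (\<lambda>m. \<bar>TT (kk (al j) m) w - expectation (TT (kk (al j) m))\<bar> < (1 / real (Suc i)) * real (kk (al j) m)) sequentially"
      by (rule stepC[OF al1]) simp
  qed
  show ?thesis
    using C stepA
  proof (eventually_elim)
    fix w
    assume H: "\<forall>j i. eventually (\<lambda>m. \<bar>TT (kk (al j) m) w - expectation (TT (kk (al j) m))\<bar> < (1 / real (Suc i)) * real (kk (al j) m)) sequentially"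
      and A: "eventually (\<lambda>t. tr t (X t w) = X t w) sequentially"
    have lims: "(\<lambda>m. TT (kk (al j) m) w / real (kk (al j) m)) \<longlonglongrightarrow> expectation (X 0)" for j
      using sub_lim[OF al1] H by blast
    have T: "(\<lambda>n. TT n w / real n) \<longlonglongrightarrow> expectation (X 0)"
    proof (rule interp)
      show "TT n w \<le> TT (Suc n) w" for n using TT_Suc tr_bd by simp
      show "0 \<le> TT n w" for n unfolding TT_def using tr_bd by (simp add: sum_nonneg)
      show "(\<lambda>m. TT (kk (1 + 1 / real (Suc j)) m) w / real (kk (1 + 1 / real (Suc j)) m)) \<longlonglongrightarrow> expectation (X 0)" for j
        using lims[of j] unfolding al_def .
    qed
    from A obtain N where N: "\<And>t. t \<ge> N \<Longrightarrow> tr t (X t w) = X t w" unfolding eventually_sequentially by blast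
    define D where "D = (\<Sum>t<N. X t w - tr t (X t w))"
    have ev: "eventually (\<lambda>n. TT n w / real n + D / real n = (\<Sum>t<n. X t w) / real n) sequentially"
      unfolding eventually_sequentially
    proof (intro exI[of _ N] allI impI)
      fix n assume n: "N \<le> n"
      have split: "{..<n} = {..<N} \<union> {N..<n}" using n by auto
      have "(\<Sum>t<n. X t w) - TT n w = (\<Sum>t<n. X t w - tr t (X t w))" unfolding TT_def by (simp add: sum_subtractf)
      also have "\<dots> = D + (\<Sum>t\<in>{N..<n}. X t w - tr t (X t w))"
        unfolding D_def split by (subst sum.union_disjoint) auto
      also have "(\<Sum>t\<in>{N..<n}. X t w - tr t (X t w)) = 0" using N by (intro sum.neutral) auto
      finally have "(\<Sum>t<n. X t w) = TT n w + D" by simp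
      then show "TT n w / real n + D / real n = (\<Sum>t<n. X t w) / real n" by (simp add: add_divide_distrib)
    qed
    have "(\<lambda>n. TT n w / real n + D / real n) \<longlonglongrightarrow> expectation (X 0) + 0"
      by (intro tendsto_add T lim_const_over_n)
    then show "(\<lambda>n. (\<Sum>t<n. X t w) / real n) \<longlonglongrightarrow> expectation (X 0)"
      using Lim_transform_eventually[OF _ ev] by simp
  qed
qed

end

lemma (in prob_space) iid_compose:
  fixes X :: "nat \<Rightarrow> 'a \<Rightarrow> real" and g :: "real \<Rightarrow> real"
  assumes ind: "indep_vars (\<lambda>_. borel) X UNIV"
    and idd: "\<And>t. distr M borel (X t) = distr M borel (X 0)"
    and g[measurable]: "g \<in> borel_measurable borel"
  shows "indep_vars (\<lambda>_. borel) (\<lambda>t w. g (X t w)) UNIV"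
    and "distr M borel (\<lambda>w. g (X t w)) = distr M borel (\<lambda>w. g (X 0 w))"
proof -
  have rv[measurable]: "X t \<in> borel_measurable M" for t using ind unfolding indep_vars_def by auto
  show "indep_vars (\<lambda>_. borel) (\<lambda>t w. g (X t w)) UNIV"
    by (rule indep_vars_compose2[OF ind]) simp
  have "distr M borel (\<lambda>w. g (X t w)) = distr (distr M borel (X t)) borel g" for t
    by (subst distr_distr) (auto simp: comp_def)
  then show "distr M borel (\<lambda>w. g (X t w)) = distr M borel (\<lambda>w. g (X 0 w))"
    using idd by metis
qed

theorem (in prob_space) slln:
  fixes X :: "nat \<Rightarrow> 'a \<Rightarrow> real"
  assumes ind: "indep_vars (\<lambda>_. borel) X UNIV"
    and idd: "\<And>t. distr M borel (X t) = distr M borel (X 0)"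
    and int0: "integrable M (X 0)"
  shows "AE w in M. (\<lambda>n. (\<Sum>t<n. X t w) / real n) \<longlonglongrightarrow> expectation (X 0)"
proof -
  have rv[measurable]: "X t \<in> borel_measurable M" for t using ind unfolding indep_vars_def by auto
  interpret P: iid_nn M "\<lambda>t w. max (X t w) 0"
  proof
    show "indep_vars (\<lambda>_. borel) (\<lambda>t w. max (X t w) 0) UNIV"
      by (rule iid_compose(1)[OF ind idd]) measurable
    show "distr M borel (\<lambda>w. max (X t w) 0) = distr M borel (\<lambda>w. max (X 0 w) 0)" for t
      by (rule iid_compose(2)[OF ind idd]) measurable
    show "integrable M (\<lambda>w. max (X 0 w) 0)" using int0 by auto
  qed auto
  interpret N: iid_nn M "\<lambda>t w. max (- X t w) 0"
  proof
    show "indep_vars (\<lambda>_. borel) (\<lambda>t w. max (- X t w) 0) UNIV"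
      by (rule iid_compose(1)[OF ind idd]) measurable
    show "distr M borel (\<lambda>w. max (- X t w) 0) = distr M borel (\<lambda>w. max (- X 0 w) 0)" for t
      by (rule iid_compose(2)[OF ind idd]) measurable
    show "integrable M (\<lambda>w. max (- X 0 w) 0)" using int0 by auto
  qed auto
  have e: "expectation (X 0) = expectation (\<lambda>w. max (X 0 w) 0) - expectation (\<lambda>w. max (- X 0 w) 0)"
  proof -
    have "expectation (X 0) = expectation (\<lambda>w. max (X 0 w) 0 - max (- X 0 w) 0)"
      by (rule Bochner_Integration.integral_cong) auto
    also have "\<dots> = expectation (\<lambda>w. max (X 0 w) 0) - expectation (\<lambda>w. max (- X 0 w) 0)"
      using int0 by (intro Bochner_Integration.integral_diff) auto
    finally show ?thesis .
  qed
  show ?thesis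
    using P.slln_nn N.slln_nn
  proof eventually_elim
    fix w
    assume a: "(\<lambda>n. (\<Sum>t<n. max (X t w) 0) / real n) \<longlonglongrightarrow> expectation (\<lambda>w. max (X 0 w) 0)"
      and b: "(\<lambda>n. (\<Sum>t<n. max (- X t w) 0) / real n) \<longlonglongrightarrow> expectation (\<lambda>w. max (- X 0 w) 0)"
    have eq: "(\<Sum>t<n. X t w) / real n = (\<Sum>t<n. max (X t w) 0) / real n - (\<Sum>t<n. max (- X t w) 0) / real n" for n
    proof -
      have "(\<Sum>t<n. X t w) = (\<Sum>t<n. max (X t w) 0 - max (- X t w) 0)" by (intro sum.cong) auto
      then show ?thesis by (simp add: sum_subtractf diff_divide_distrib)
    qed
    show "(\<lambda>n. (\<Sum>t<n. X t w) / real n) \<longlonglongrightarrow> expectation (X 0)"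
      unfolding eq e by (rule tendsto_diff[OF a b])
  qed
qed

definition sqi :: "'w measure \<Rightarrow> ('w \<Rightarrow> real) \<Rightarrow> bool" where
  "sqi M f \<longleftrightarrow> f \<in> borel_measurable M \<and> integrable M (\<lambda>w. (f w)\<^sup>2)"

context prob_space begin

lemma sqi_int: "sqi M f \<Longrightarrow> integrable M f"
  unfolding sqi_def by (auto intro: square_integrable_imp_integrable)

lemma sqi_prod: assumes "sqi M f" "sqi M g" shows "integrable M (\<lambda>w. f w * g w)"
proof (rule Bochner_Integration.integrable_bound[where f="\<lambda>w. (f w)\<^sup>2 + (g w)\<^sup>2"])
  show "integrable M (\<lambda>w. (f w)\<^sup>2 + (g w)\<^sup>2)" using assms unfolding sqi_def by auto
  show "(\<lambda>w. f w * g w) \<in> borel_measurable M" using assms unfolding sqi_def by auto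
  show "AE x in M. norm (f x * g x) \<le> norm ((f x)\<^sup>2 + (g x)\<^sup>2)"
  proof (intro AE_I2)
    fix x
    have "\<bar>f x\<bar> * \<bar>g x\<bar> \<le> (f x)\<^sup>2 + (g x)\<^sup>2"
    proof (cases "\<bar>f x\<bar> \<le> \<bar>g x\<bar>")
      case True
      then have "\<bar>f x\<bar> * \<bar>g x\<bar> \<le> \<bar>g x\<bar> * \<bar>g x\<bar>" by (rule mult_right_mono) simp
      also have "\<dots> = (g x)\<^sup>2" by (simp add: power2_eq_square)
      finally show ?thesis by (smt (verit) zero_le_power2)
    next
      case False
      then have "\<bar>f x\<bar> * \<bar>g x\<bar> \<le> \<bar>f x\<bar> * \<bar>f x\<bar>" by (intro mult_left_mono) auto
      also have "\<dots> = (f x)\<^sup>2" by (simp add: power2_eq_square)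
      finally show ?thesis by (smt (verit) zero_le_power2)
    qed
    then show "norm (f x * g x) \<le> norm ((f x)\<^sup>2 + (g x)\<^sup>2)" by (simp add: abs_mult)
  qed
qed

lemma sqi_add: assumes "sqi M f" "sqi M g" shows "sqi M (\<lambda>w. f w + g w)"
proof -
  have "integrable M (\<lambda>w. (f w)\<^sup>2 + 2 * (f w * g w) + (g w)\<^sup>2)"
    using assms sqi_prod[OF assms] unfolding sqi_def by auto
  moreover have "(\<lambda>w. (f w + g w)\<^sup>2) = (\<lambda>w. (f w)\<^sup>2 + 2 * (f w * g w) + (g w)\<^sup>2)"
    by (auto simp: power2_sum fun_eq_iff)
  moreover have [measurable]: "f \<in> borel_measurable M" "g \<in> borel_measurable M" using assms unfolding sqi_def by auto
  moreover have "(\<lambda>w. f w + g w) \<in> borel_measurable M" by measurable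
  ultimately show ?thesis unfolding sqi_def by simp
qed

lemma sqi_sum: assumes "\<And>i. i \<in> S \<Longrightarrow> sqi M (f i)" shows "sqi M (\<lambda>w. \<Sum>i\<in>S. f i w)"
  using assms
proof (induction S rule: infinite_finite_induct)
  case (infinite S) then show ?case by (simp add: sqi_def)
next
  case empty then show ?case by (simp add: sqi_def)
next
  case (insert x F)
  then show ?case by (simp add: sqi_add)
qed

lemma sqi_div: assumes "sqi M f" shows "sqi M (\<lambda>w. f w / c)"
proof -
  have [measurable]: "f \<in> borel_measurable M" using assms unfolding sqi_def by auto
  have "(\<lambda>w. f w / c) \<in> borel_measurable M" by measurable
  then show ?thesis using assms unfolding sqi_def by (simp add: power_divide)
qed

lemma pexp_eq: "pexp M f = expectation f" unfolding pexp_def by simp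

lemma pcov_eq: assumes "sqi M f" "sqi M g"
  shows "pcov M f g = expectation (\<lambda>w. f w * g w) - expectation f * expectation g"
proof -
  have i: "integrable M f" "integrable M g" "integrable M (\<lambda>w. f w * g w)"
    using assms sqi_int sqi_prod by auto
  have "pcov M f g = expectation (\<lambda>w. f w * g w - expectation g * f w - expectation f * g w + expectation f * expectation g)"
    unfolding pcov_def pexp_def by (rule Bochner_Integration.integral_cong) (auto simp: algebra_simps)
  also have "\<dots> = expectation (\<lambda>w. f w * g w) - expectation f * expectation g"
    using i by (simp add: prob_space)
  finally show ?thesis .
qed

lemma pcov_comm: "pcov M f g = pcov M g f"
  unfolding pcov_def by (simp add: mult.commute)

lemma pvar_pcov: "pvar M f = pcov M f f"
  unfolding pvar_def pcov_def by (simp add: power2_eq_square)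

lemma pcov_sum_sum:
  assumes S: "finite S" "finite S'" and f: "\<And>i. i \<in> S \<Longrightarrow> sqi M (f i)" and g: "\<And>j. j \<in> S' \<Longrightarrow> sqi M (g j)"
  shows "pcov M (\<lambda>w. \<Sum>i\<in>S. f i w) (\<lambda>w. \<Sum>j\<in>S'. g j w) = (\<Sum>i\<in>S. \<Sum>j\<in>S'. pcov M (f i) (g j))"
proof -
  have fi: "\<And>i. i \<in> S \<Longrightarrow> integrable M (f i)" using f sqi_int by auto
  have gi: "\<And>j. j \<in> S' \<Longrightarrow> integrable M (g j)" using g sqi_int by auto
  have fgi: "\<And>i j. i \<in> S \<Longrightarrow> j \<in> S' \<Longrightarrow> integrable M (\<lambda>w. f i w * g j w)" using f g sqi_prod by auto
  have "pcov M (\<lambda>w. \<Sum>i\<in>S. f i w) (\<lambda>w. \<Sum>j\<in>S'. g j w)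
      = expectation (\<lambda>w. (\<Sum>i\<in>S. f i w) * (\<Sum>j\<in>S'. g j w)) - expectation (\<lambda>w. \<Sum>i\<in>S. f i w) * expectation (\<lambda>w. \<Sum>j\<in>S'. g j w)"
    by (rule pcov_eq) (auto intro!: sqi_sum f g)
  also have "expectation (\<lambda>w. (\<Sum>i\<in>S. f i w) * (\<Sum>j\<in>S'. g j w)) = (\<Sum>i\<in>S. \<Sum>j\<in>S'. expectation (\<lambda>w. f i w * g j w))"
    unfolding sum_product using fgi by (simp add: integral_sum integrable_sum)
  also have "expectation (\<lambda>w. \<Sum>i\<in>S. f i w) = (\<Sum>i\<in>S. expectation (f i))" using fi by (simp add: integral_sum)
  also have "expectation (\<lambda>w. \<Sum>j\<in>S'. g j w) = (\<Sum>j\<in>S'. expectation (g j))" using gi by (simp add: integral_sum)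
  also have "(\<Sum>i\<in>S. \<Sum>j\<in>S'. expectation (\<lambda>w. f i w * g j w)) - (\<Sum>i\<in>S. expectation (f i)) * (\<Sum>j\<in>S'. expectation (g j))
      = (\<Sum>i\<in>S. \<Sum>j\<in>S'. expectation (\<lambda>w. f i w * g j w) - expectation (f i) * expectation (g j))"
    by (simp add: sum_product sum_subtractf)
  also have "\<dots> = (\<Sum>i\<in>S. \<Sum>j\<in>S'. pcov M (f i) (g j))"
    using f g by (intro sum.cong refl) (simp add: pcov_eq)
  finally show ?thesis .
qed

lemma pcov_div: assumes "sqi M f" "sqi M g"
  shows "pcov M (\<lambda>w. f w / c) (\<lambda>w. g w / d) = pcov M f g / (c * d)"
proof -
  have i: "integrable M f" "integrable M g" "integrable M (\<lambda>w. f w * g w)"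
    using assms sqi_int sqi_prod by auto
  have "pcov M (\<lambda>w. f w / c) (\<lambda>w. g w / d) = expectation (\<lambda>w. (f w * g w) / (c * d)) - (expectation f / c) * (expectation g / d)"
    using assms by (simp add: pcov_eq sqi_div)
  also have "\<dots> = (expectation (\<lambda>w. f w * g w) - expectation f * expectation g) / (c * d)"
    by (simp add: diff_divide_distrib)
  finally show ?thesis using assms by (simp add: pcov_eq)
qed

lemma pcov_add: assumes "sqi M f1" "sqi M f2" "sqi M g1" "sqi M g2"
  shows "pcov M (\<lambda>w. f1 w + f2 w) (\<lambda>w. g1 w + g2 w) = pcov M f1 g1 + pcov M f1 g2 + pcov M f2 g1 + pcov M f2 g2"
proof -
  have i: "integrable M f1" "integrable M f2" "integrable M g1" "integrable M g2"
    "integrable M (\<lambda>w. f1 w * g1 w)" "integrable M (\<lambda>w. f1 w * g2 w)"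
    "integrable M (\<lambda>w. f2 w * g1 w)" "integrable M (\<lambda>w. f2 w * g2 w)"
    using assms sqi_int sqi_prod by auto
  show ?thesis using assms i
    by (simp add: pcov_eq sqi_add algebra_simps)
qed

end

lemma smean_sum: "smean n (\<lambda>t. (\<Sum>i\<in>S. f i t) / c) = (\<Sum>i\<in>S. smean n (f i)) / c"
  unfolding smean_def by (simp add: sum_divide_distrib[symmetric] sum.swap[of _ S])

lemma scov_alt: "scov n a b = smean n (\<lambda>t. a t * b t) - smean n a * smean n b"
proof (cases "n = 0")
  case True then show ?thesis by (simp add: scov_def smean_def)
next
  case False
  then have n: "real n \<noteq> 0" by simp
  have "(\<Sum>t<n. (a t - smean n a) * (b t - smean n b))
      = (\<Sum>t<n. a t * b t) - smean n b * (\<Sum>t<n. a t) - smean n a * (\<Sum>t<n. b t) + real n * (smean n a * smean n b)"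
    by (simp add: algebra_simps sum.distrib sum_subtractf sum_distrib_left sum_distrib_right)
  also have "(\<Sum>t<n. a t) = real n * smean n a" using n by (simp add: smean_def)
  also have "(\<Sum>t<n. b t) = real n * smean n b" using n by (simp add: smean_def)
  finally have "(\<Sum>t<n. (a t - smean n a) * (b t - smean n b))
      = (\<Sum>t<n. a t * b t) - real n * (smean n a * smean n b)" by (simp add: algebra_simps)
  then show ?thesis unfolding scov_def using n by (simp add: smean_def diff_divide_distrib)
qed

lemma svar_scov: "svar n a = scov n a a"
  unfolding svar_def scov_def by (simp add: power2_eq_square)

lemma scor_lim:
  assumes ma: "(\<lambda>n. smean n a) \<longlonglongrightarrow> Ma" and mb: "(\<lambda>n. smean n b) \<longlonglongrightarrow> Mb"
    and mab: "(\<lambda>n. smean n (\<lambda>t. a t * b t)) \<longlonglongrightarrow> Mab"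
    and maa: "(\<lambda>n. smean n (\<lambda>t. a t * a t)) \<longlonglongrightarrow> Maa"
    and mbb: "(\<lambda>n. smean n (\<lambda>t. b t * b t)) \<longlonglongrightarrow> Mbb"
    and pos: "(Maa - Ma * Ma) * (Mbb - Mb * Mb) \<noteq> 0"
  shows "(\<lambda>n. scor n a b) \<longlonglongrightarrow> (Mab - Ma * Mb) / sqrt ((Maa - Ma * Ma) * (Mbb - Mb * Mb))"
proof -
  have "(\<lambda>n. scov n a b / sqrt (scov n a a * scov n b b)) \<longlonglongrightarrow> (Mab - Ma * Mb) / sqrt ((Maa - Ma * Ma) * (Mbb - Mb * Mb))"
    unfolding scov_alt using pos by (intro tendsto_intros ma mb mab maa mbb) auto
  then show ?thesis unfolding scor_def svar_scov .
qed

lemma svar_const: assumes "\<And>t. a t = c" shows "svar n a = 0"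
proof (cases "n = 0")
  case True then show ?thesis by (simp add: svar_def)
next
  case False
  then have "smean n a = c" using assms by (simp add: smean_def)
  then show ?thesis using assms by (simp add: svar_def)
qed

lemma scor_const1: assumes "\<And>t. a t = c" shows "scor n a b = 0"
  unfolding scor_def svar_const[OF assms] by simp

lemma scor_const2: assumes "\<And>t. b t = c" shows "scor n a b = 0"
  unfolding scor_def svar_const[OF assms] by simp

lemma sqrt_sq_pos: "0 < s \<Longrightarrow> sqrt (s * s) = s" by simp

lemma popA:
  fixes M :: "'w measure" and XA eA :: "nat \<Rightarrow> 'a \<Rightarrow> 'w \<Rightarrow> real" and etaA :: "'a \<Rightarrow> 'a \<Rightarrow> real"
  assumes P: "prob_space M"
    and measA: "\<And>t i. XA t i \<in> borel_measurable M" "\<And>t i. eA t i \<in> borel_measurable M"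
    and sqA: "\<And>t i. integrable M (\<lambda>w. (XA t i w)\<^sup>2)" "\<And>t i. integrable M (\<lambda>w. (eA t i w)\<^sup>2)"
    and sA_pos: "sA2 > 0"
    and varXA: "\<And>t i. pvar M (XA t i) = sA2" and vareA: "\<And>t i. pvar M (eA t i) = gA2"
    and unc_eAeA: "\<And>t i i'. i \<noteq> i' \<Longrightarrow> pcov M (eA t i) (eA t i') = 0"
    and unc_eAXA: "\<And>t i i'. pcov M (eA t i) (XA t i') = 0"
    and etaA_def: "\<And>t i i'. pcor M (XA t i) (XA t i') = etaA i i'"
    and fin: "finite \<nu>" and ne: "\<nu> \<noteq> {}"
  shows "pvar M (\<lambda>w. (\<Sum>i\<in>\<nu>. XA 0 i w + eA 0 i w) / real (card \<nu>))
       = sA2 * ((\<Sum>i\<in>\<nu>. \<Sum>i'\<in>\<nu>. etaA i i') / (real (card \<nu>))\<^sup>2 + gA2 / (real (card \<nu>) * sA2))"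
proof -
  interpret prob_space M by (rule P)
  have sX: "sqi M (XA t i)" for t i using measA sqA unfolding sqi_def by auto
  have se: "sqi M (eA t i)" for t i using measA sqA unfolding sqi_def by auto
  have sY: "sqi M (\<lambda>w. XA 0 i w + eA 0 i w)" for i by (rule sqi_add[OF sX se])
  define c where "c = real (card \<nu>)"
  have c0: "0 < c" unfolding c_def using fin ne by (simp add: card_gt_0_iff)
  have cXX: "pcov M (XA 0 i) (XA 0 i') = etaA i i' * sA2" for i i'
  proof -
    have "etaA i i' = pcov M (XA 0 i) (XA 0 i') / sqrt (sA2 * sA2)"
      using etaA_def[of 0 i i'] unfolding pcor_def varXA by simp
    then show ?thesis using sA_pos by simp
  qed
  have cXe: "pcov M (XA 0 i) (eA 0 i') = 0" for i i' using unc_eAXA pcov_comm by metis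
  have cee: "pcov M (eA 0 i) (eA 0 i') = (if i = i' then gA2 else 0)" for i i'
    using unc_eAeA vareA pvar_pcov by metis
  have cYY: "pcov M (\<lambda>w. XA 0 i w + eA 0 i w) (\<lambda>w. XA 0 i' w + eA 0 i' w) = etaA i i' * sA2 + (if i = i' then gA2 else 0)" for i i'
    by (simp add: pcov_add[OF sX se sX se] cXX cXe cee unc_eAXA)
  have "pvar M (\<lambda>w. (\<Sum>i\<in>\<nu>. XA 0 i w + eA 0 i w) / c)
      = pcov M (\<lambda>w. \<Sum>i\<in>\<nu>. XA 0 i w + eA 0 i w) (\<lambda>w. \<Sum>i\<in>\<nu>. XA 0 i w + eA 0 i w) / (c * c)"
    unfolding pvar_pcov by (rule pcov_div) (auto intro!: sqi_sum sY)
  also have "pcov M (\<lambda>w. \<Sum>i\<in>\<nu>. XA 0 i w + eA 0 i w) (\<lambda>w. \<Sum>i\<in>\<nu>. XA 0 i w + eA 0 i w)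
      = (\<Sum>i\<in>\<nu>. \<Sum>i'\<in>\<nu>. etaA i i' * sA2 + (if i = i' then gA2 else 0))"
    using fin by (simp add: pcov_sum_sum sY cYY)
  also have "\<dots> = sA2 * (\<Sum>i\<in>\<nu>. \<Sum>i'\<in>\<nu>. etaA i i') + c * gA2"
    using fin unfolding c_def by (simp add: sum.distrib sum_distrib_left sum_distrib_right mult.commute)
  finally have H: "pvar M (\<lambda>w. (\<Sum>i\<in>\<nu>. XA 0 i w + eA 0 i w) / c) = (sA2 * (\<Sum>i\<in>\<nu>. \<Sum>i'\<in>\<nu>. etaA i i') + c * gA2) / (c * c)" .
  have "sA2 * ((\<Sum>i\<in>\<nu>. \<Sum>i'\<in>\<nu>. etaA i i') / c\<^sup>2 + gA2 / (c * sA2)) = (sA2 * (\<Sum>i\<in>\<nu>. \<Sum>i'\<in>\<nu>. etaA i i') + c * gA2) / (c * c)"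
    using c0 sA_pos by (simp add: field_simps power2_eq_square)
  then show ?thesis using H unfolding c_def by simp
qed

lemma popAB:
  fixes M :: "'w measure" and XA eA :: "nat \<Rightarrow> 'a \<Rightarrow> 'w \<Rightarrow> real" and XB eB :: "nat \<Rightarrow> 'b \<Rightarrow> 'w \<Rightarrow> real"
  assumes P: "prob_space M"
    and measA: "\<And>t i. XA t i \<in> borel_measurable M" "\<And>t i. eA t i \<in> borel_measurable M"
    and measB: "\<And>t j. XB t j \<in> borel_measurable M" "\<And>t j. eB t j \<in> borel_measurable M"
    and sqA: "\<And>t i. integrable M (\<lambda>w. (XA t i w)\<^sup>2)" "\<And>t i. integrable M (\<lambda>w. (eA t i w)\<^sup>2)"
    and sqB: "\<And>t j. integrable M (\<lambda>w. (XB t j w)\<^sup>2)" "\<And>t j. integrable M (\<lambda>w. (eB t j w)\<^sup>2)"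
    and varXA: "\<And>t i. pvar M (XA t i) = sA2"
    and varXB: "\<And>t j. pvar M (XB t j) = sB2"
    and unc_eAeB: "\<And>t i j. pcov M (eA t i) (eB t j) = 0"
    and unc_eAXB: "\<And>t i j. pcov M (eA t i) (XB t j) = 0"
    and unc_eBXA: "\<And>t j i. pcov M (eB t j) (XA t i) = 0"
    and corAB: "\<And>t i j. pcor M (XA t i) (XB t j) = rho"
    and sA_pos: "sA2 > 0" and sB_pos: "sB2 > 0"
    and finA: "finite \<nu>A" and neA: "\<nu>A \<noteq> {}" and finB: "finite \<nu>B" and neB: "\<nu>B \<noteq> {}"
  shows "pcov M (\<lambda>w. (\<Sum>i\<in>\<nu>A. XA 0 i w + eA 0 i w) / real (card \<nu>A)) (\<lambda>w. (\<Sum>j\<in>\<nu>B. XB 0 j w + eB 0 j w) / real (card \<nu>B))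
       = rho * sqrt (sA2 * sB2)"
proof -
  interpret prob_space M by (rule P)
  have sX: "sqi M (XA t i)" for t i using measA sqA unfolding sqi_def by auto
  have se: "sqi M (eA t i)" for t i using measA sqA unfolding sqi_def by auto
  have sXB: "sqi M (XB t i)" for t i using measB sqB unfolding sqi_def by auto
  have seB: "sqi M (eB t i)" for t i using measB sqB unfolding sqi_def by auto
  have sY: "sqi M (\<lambda>w. XA 0 i w + eA 0 i w)" for i by (rule sqi_add[OF sX se])
  have sZ: "sqi M (\<lambda>w. XB 0 i w + eB 0 i w)" for i by (rule sqi_add[OF sXB seB])
  define cA where "cA = real (card \<nu>A)"
  define cB where "cB = real (card \<nu>B)"
  have cA0: "0 < cA" unfolding cA_def using finA neA by (simp add: card_gt_0_iff)
  have cB0: "0 < cB" unfolding cB_def using finB neB by (simp add: card_gt_0_iff)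
  have sp: "0 < sqrt (sA2 * sB2)" using sA_pos sB_pos by simp
  have cXX: "pcov M (XA 0 i) (XB 0 j) = rho * sqrt (sA2 * sB2)" for i j
  proof -
    have "rho = pcov M (XA 0 i) (XB 0 j) / sqrt (sA2 * sB2)"
      using corAB[of 0 i j] unfolding pcor_def varXA varXB by simp
    then show ?thesis using sp sA_pos sB_pos by simp
  qed
  have cXe: "pcov M (XA 0 i) (eB 0 j) = 0" for i j using unc_eBXA pcov_comm by metis
  have cYZ: "pcov M (\<lambda>w. XA 0 i w + eA 0 i w) (\<lambda>w. XB 0 j w + eB 0 j w) = rho * sqrt (sA2 * sB2)" for i j
    by (simp add: pcov_add[OF sX se sXB seB] cXX cXe unc_eAXB unc_eAeB)
  have "pcov M (\<lambda>w. (\<Sum>i\<in>\<nu>A. XA 0 i w + eA 0 i w) / cA) (\<lambda>w. (\<Sum>j\<in>\<nu>B. XB 0 j w + eB 0 j w) / cB)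
      = pcov M (\<lambda>w. \<Sum>i\<in>\<nu>A. XA 0 i w + eA 0 i w) (\<lambda>w. \<Sum>j\<in>\<nu>B. XB 0 j w + eB 0 j w) / (cA * cB)"
    by (rule pcov_div) (auto intro!: sqi_sum sY sZ)
  also have "pcov M (\<lambda>w. \<Sum>i\<in>\<nu>A. XA 0 i w + eA 0 i w) (\<lambda>w. \<Sum>j\<in>\<nu>B. XB 0 j w + eB 0 j w)
      = (\<Sum>i\<in>\<nu>A. \<Sum>j\<in>\<nu>B. rho * sqrt (sA2 * sB2))"
    using finA finB by (simp add: pcov_sum_sum sY sZ cYZ)
  also have "\<dots> = cA * cB * (rho * sqrt (sA2 * sB2))" unfolding cA_def cB_def by simp
  finally show ?thesis unfolding cA_def[symmetric] cB_def[symmetric] using cA0 cB0 by simp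
qed

lemma (in prob_space) slln_vec:
  fixes V :: "nat \<Rightarrow> 'a \<Rightarrow> 'k" and N :: "'k measure" and g :: "'k \<Rightarrow> real"
  assumes ind: "indep_vars (\<lambda>_. N) V UNIV" and idd: "\<And>t. distr M N (V t) = distr M N (V 0)"
    and g[measurable]: "g \<in> borel_measurable N" and int: "integrable M (\<lambda>w. g (V 0 w))"
  shows "AE w in M. (\<lambda>n. (\<Sum>t<n. g (V t w)) / real n) \<longlonglongrightarrow> expectation (\<lambda>w. g (V 0 w))"
proof (rule slln)
  have rv[measurable]: "V t \<in> measurable M N" for t using ind unfolding indep_vars_def by auto
  show "indep_vars (\<lambda>_. borel) (\<lambda>t w. g (V t w)) UNIV"
    by (rule indep_vars_compose2[OF ind]) simp
  have "distr M borel (\<lambda>w. g (V t w)) = distr (distr M N (V t)) borel g" for t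
    by (subst distr_distr) (auto simp: comp_def)
  then show "distr M borel (\<lambda>w. g (V t w)) = distr M borel (\<lambda>w. g (V 0 w))" for t
    using idd by metis
  show "integrable M (\<lambda>w. g (V 0 w))" by (rule int)
qed

theorem corollary1:
  fixes M :: "'w measure"
    and XA eA :: "nat \<Rightarrow> 'a::finite \<Rightarrow> 'w \<Rightarrow> real"
    and XB eB :: "nat \<Rightarrow> 'b::finite \<Rightarrow> 'w \<Rightarrow> real"
    and sA2 gA2 sB2 gB2 rho :: real
    and etaA :: "'a \<Rightarrow> 'a \<Rightarrow> real" and etaB :: "'b \<Rightarrow> 'b \<Rightarrow> real"
    and CA :: "'a set set" and CB :: "'b set set"
  assumes P: "prob_space M"
    and measA: "\<And>t i. XA t i \<in> borel_measurable M" "\<And>t i. eA t i \<in> borel_measurable M"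
    and measB: "\<And>t j. XB t j \<in> borel_measurable M" "\<And>t j. eB t j \<in> borel_measurable M"
    and sqA: "\<And>t i. integrable M (\<lambda>w. (XA t i w)\<^sup>2)" "\<And>t i. integrable M (\<lambda>w. (eA t i w)\<^sup>2)"
    and sqB: "\<And>t j. integrable M (\<lambda>w. (XB t j w)\<^sup>2)" "\<And>t j. integrable M (\<lambda>w. (eB t j w)\<^sup>2)"
    and sA_pos: "sA2 > 0" and sB_pos: "sB2 > 0"
    and varXA: "\<And>t i. pvar M (XA t i) = sA2" and vareA: "\<And>t i. pvar M (eA t i) = gA2"
    and varXB: "\<And>t j. pvar M (XB t j) = sB2" and vareB: "\<And>t j. pvar M (eB t j) = gB2"
    and unc_eAeA: "\<And>t i i'. i \<noteq> i' \<Longrightarrow> pcov M (eA t i) (eA t i') = 0"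
    and unc_eBeB: "\<And>t j j'. j \<noteq> j' \<Longrightarrow> pcov M (eB t j) (eB t j') = 0"
    and unc_eAeB: "\<And>t i j. pcov M (eA t i) (eB t j) = 0"
    and unc_eAXA: "\<And>t i i'. pcov M (eA t i) (XA t i') = 0"
    and unc_eAXB: "\<And>t i j. pcov M (eA t i) (XB t j) = 0"
    and unc_eBXA: "\<And>t j i. pcov M (eB t j) (XA t i) = 0"
    and unc_eBXB: "\<And>t j j'. pcov M (eB t j) (XB t j') = 0"
    and etaA_def: "\<And>t i i'. pcor M (XA t i) (XA t i') = etaA i i'"
    and etaB_def: "\<And>t j j'. pcor M (XB t j) (XB t j') = etaB j j'"
    and corAB: "\<And>t i j. pcor M (XA t i) (XB t j) = rho"
    and indep: "prob_space.indep_vars M (\<lambda>_. Pi\<^sub>M UNIV (\<lambda>_. borel))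
        (\<lambda>t w. \<lambda>k. case k of Inl i \<Rightarrow> XA t i w + eA t i w | Inr j \<Rightarrow> XB t j w + eB t j w) UNIV"
    and ident: "\<And>t. distr M (Pi\<^sub>M UNIV (\<lambda>_. borel))
          (\<lambda>w. \<lambda>k. case k of Inl i \<Rightarrow> XA t i w + eA t i w | Inr j \<Rightarrow> XB t j w + eB t j w)
        = distr M (Pi\<^sub>M UNIV (\<lambda>_. borel))
          (\<lambda>w. \<lambda>k. case k of Inl i \<Rightarrow> XA 0 i w + eA 0 i w | Inr j \<Rightarrow> XB 0 j w + eB 0 j w)"
    and partA: "partition_on (UNIV :: 'a set) CA"
    and partB: "partition_on (UNIV :: 'b set) CB"
  shows "AE w in M.
    (\<lambda>n. (1 / (real (card CA) * real (card CB))) *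
       (\<Sum>\<nu>A\<in>CA. \<Sum>\<nu>B\<in>CB.
          scor n (\<lambda>t. (\<Sum>i\<in>\<nu>A. XA t i w + eA t i w) / real (card \<nu>A))
                 (\<lambda>t. (\<Sum>j\<in>\<nu>B. XB t j w + eB t j w) / real (card \<nu>B))))
    \<longlonglongrightarrow>
    (1 / (real (card CA) * real (card CB))) *
       (\<Sum>\<nu>A\<in>CA. \<Sum>\<nu>B\<in>CB.
          rho / sqrt (((\<Sum>i\<in>\<nu>A. \<Sum>i'\<in>\<nu>A. etaA i i') / (real (card \<nu>A))\<^sup>2
                        + gA2 / (real (card \<nu>A) * sA2))
                    * ((\<Sum>j\<in>\<nu>B. \<Sum>j'\<in>\<nu>B. etaB j j') / (real (card \<nu>B))\<^sup>2
                        + gB2 / (real (card \<nu>B) * sB2))))"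
proof -
  interpret prob_space M by (rule P)
  define V where "V t w = (\<lambda>k. case k of Inl i \<Rightarrow> XA t i w + eA t i w | Inr j \<Rightarrow> XB t j w + eB t j w)" for t w
  define NN where "NN = (Pi\<^sub>M (UNIV :: ('a + 'b) set) (\<lambda>_. borel) :: (('a + 'b) \<Rightarrow> real) measure)"
  have indV: "indep_vars (\<lambda>_. NN) V UNIV" using indep unfolding V_def NN_def .
  have idV: "distr M NN (V t) = distr M NN (V 0)" for t using ident[of t] unfolding V_def NN_def .
  have Vmeas: "V t \<in> measurable M NN" for t using indV unfolding indep_vars_def by auto
  have sX: "sqi M (XA t i)" "sqi M (eA t i)" for t i using measA sqA unfolding sqi_def by auto
  have sXB: "sqi M (XB t i)" "sqi M (eB t i)" for t i using measB sqB unfolding sqi_def by auto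
  have sqV: "sqi M (\<lambda>w. V t w k)" for t k
  proof (cases k)
    case (Inl i) then show ?thesis unfolding V_def using sqi_add[OF sX(1) sX(2)] by simp
  next
    case (Inr j) then show ?thesis unfolding V_def using sqi_add[OF sXB(1) sXB(2)] by simp
  qed
  have L1: "AE w in M. \<forall>k\<in>UNIV. (\<lambda>n. smean n (\<lambda>t. V t w k)) \<longlonglongrightarrow> expectation (\<lambda>w. V 0 w k)"
  proof (rule AE_finite_allI)
    fix k :: "'a + 'b"
    show "AE w in M. (\<lambda>n. smean n (\<lambda>t. V t w k)) \<longlonglongrightarrow> expectation (\<lambda>w. V 0 w k)"
      unfolding smean_def
      by (rule slln_vec[OF indV idV]) (auto simp: NN_def intro: sqi_int[OF sqV])
  qed simp
  have L2: "AE w in M. \<forall>p\<in>UNIV. (\<lambda>n. smean n (\<lambda>t. V t w (fst p) * V t w (snd p))) \<longlonglongrightarrow> expectation (\<lambda>w. V 0 w (fst p) * V 0 w (snd p))"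
  proof (rule AE_finite_allI)
    fix p :: "('a + 'b) \<times> ('a + 'b)"
    show "AE w in M. (\<lambda>n. smean n (\<lambda>t. V t w (fst p) * V t w (snd p))) \<longlonglongrightarrow> expectation (\<lambda>w. V 0 w (fst p) * V 0 w (snd p))"
      unfolding smean_def
      by (rule slln_vec[OF indV idV, where g="\<lambda>v. v (fst p) * v (snd p)"]) (auto simp: NN_def intro: sqi_prod[OF sqV sqV])
  qed simp
  define avg where "avg S t w = (\<Sum>k\<in>S. V t w k) / real (card S)" for S t w
  have sqavg: "sqi M (avg S t)" for S t unfolding avg_def by (intro sqi_div sqi_sum sqV)
  have Dg: "AE w in M. \<forall>S\<in>UNIV. pvar M (avg S 0) = 0 \<longrightarrow> (\<forall>t. avg S t w = expectation (avg S 0))"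
  proof (rule AE_finite_allI)
    fix S :: "('a + 'b) set"
    show "AE w in M. pvar M (avg S 0) = 0 \<longrightarrow> (\<forall>t. avg S t w = expectation (avg S 0))"
    proof (cases "pvar M (avg S 0) = 0")
      case False then show ?thesis by simp
    next
      case True
      define c where "c = expectation (avg S 0)"
      define g where "g v = ((\<Sum>k\<in>S. v k) / real (card S) - c)\<^sup>2" for v :: "'a + 'b \<Rightarrow> real"
      have gm[measurable]: "g \<in> borel_measurable NN" unfolding g_def NN_def by measurable
      have gV: "g (V t w) = (avg S t w - c)\<^sup>2" for t w unfolding g_def avg_def by simp
      have "AE w in M. avg S t w = c" for t
      proof -
        have sq: "sqi M (\<lambda>w. avg S t w + (- c))" by (intro sqi_add sqavg) (simp add: sqi_def)
        have int: "integrable M (\<lambda>w. (avg S t w - c)\<^sup>2)" using sq unfolding sqi_def by simp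
        have "expectation (\<lambda>w. (avg S t w - c)\<^sup>2) = expectation (\<lambda>w. g (V t w))" unfolding gV ..
        also have "\<dots> = integral\<^sup>L (distr M NN (V t)) g" by (rule integral_distr[OF Vmeas gm, symmetric])
        also have "\<dots> = integral\<^sup>L (distr M NN (V 0)) g" by (subst idV[of t]) (rule refl)
        also have "\<dots> = expectation (\<lambda>w. g (V 0 w))" by (rule integral_distr[OF Vmeas gm])
        also have "\<dots> = pvar M (avg S 0)" unfolding gV pvar_def pexp_def c_def ..
        finally have "expectation (\<lambda>w. (avg S t w - c)\<^sup>2) = 0" using True by simp
        then have "AE w in M. (avg S t w - c)\<^sup>2 = 0"
          using integral_nonneg_eq_0_iff_AE[OF int] by simp
        then show ?thesis by (rule AE_mp) (intro AE_I2, simp)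
      qed
      then have "AE w in M. \<forall>t. avg S t w = c" unfolding AE_all_countable ..
      then show ?thesis unfolding c_def by simp
    qed
  qed simp
  have gen1: "(\<lambda>n. smean n (\<lambda>t. avg S t w)) \<longlonglongrightarrow> expectation (avg S 0)"
    if l1: "\<forall>k\<in>UNIV. (\<lambda>n. smean n (\<lambda>t. V t w k)) \<longlonglongrightarrow> expectation (\<lambda>w. V 0 w k)" for S w
  proof -
    have "(\<lambda>n. smean n (\<lambda>t. avg S t w)) = (\<lambda>n. (\<Sum>k\<in>S. smean n (\<lambda>t. V t w k)) / real (card S))"
      unfolding avg_def by (simp add: smean_sum)
    moreover have "(\<lambda>n. (\<Sum>k\<in>S. smean n (\<lambda>t. V t w k)) / real (card S)) \<longlonglongrightarrow> (\<Sum>k\<in>S. expectation (\<lambda>w. V 0 w k)) / real (card S)"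
      unfolding divide_inverse using l1 by (intro tendsto_mult_right tendsto_sum) auto
    moreover have "(\<Sum>k\<in>S. expectation (\<lambda>w. V 0 w k)) / real (card S) = expectation (avg S 0)"
      unfolding avg_def using sqi_int[OF sqV] by (simp add: integral_sum)
    ultimately show ?thesis by simp
  qed
  have prodeq: "avg S t w * avg S' t w = (\<Sum>p\<in>S \<times> S'. V t w (fst p) * V t w (snd p)) / (real (card S) * real (card S'))"
    for S S' t w
    unfolding avg_def by (simp add: sum_product sum.cartesian_product case_prod_beta')
  have gen2: "(\<lambda>n. smean n (\<lambda>t. avg S t w * avg S' t w)) \<longlonglongrightarrow> expectation (\<lambda>w. avg S 0 w * avg S' 0 w)"
    if l2: "\<forall>p\<in>UNIV. (\<lambda>n. smean n (\<lambda>t. V t w (fst p) * V t w (snd p))) \<longlonglongrightarrow> expectation (\<lambda>w. V 0 w (fst p) * V 0 w (snd p))" for S S' w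
  proof -
    have "(\<lambda>n. smean n (\<lambda>t. avg S t w * avg S' t w)) = (\<lambda>n. (\<Sum>p\<in>S \<times> S'. smean n (\<lambda>t. V t w (fst p) * V t w (snd p))) / (real (card S) * real (card S')))"
      unfolding prodeq by (simp add: smean_sum)
    moreover have "(\<lambda>n. (\<Sum>p\<in>S \<times> S'. smean n (\<lambda>t. V t w (fst p) * V t w (snd p))) / (real (card S) * real (card S')))
        \<longlonglongrightarrow> (\<Sum>p\<in>S \<times> S'. expectation (\<lambda>w. V 0 w (fst p) * V 0 w (snd p))) / (real (card S) * real (card S'))"
      unfolding divide_inverse using l2 by (intro tendsto_mult_right tendsto_sum) auto
    moreover have "(\<Sum>p\<in>S \<times> S'. expectation (\<lambda>w. V 0 w (fst p) * V 0 w (snd p))) / (real (card S) * real (card S'))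
        = expectation (\<lambda>w. avg S 0 w * avg S' 0 w)"
      unfolding prodeq using sqi_prod[OF sqV sqV] by (simp add: integral_sum)
    ultimately show ?thesis by simp
  qed
  have clA: "finite \<nu> \<and> \<nu> \<noteq> {}" if "\<nu> \<in> CA" for \<nu> using partA that unfolding partition_on_def by auto
  have clB: "finite \<nu> \<and> \<nu> \<noteq> {}" if "\<nu> \<in> CB" for \<nu> using partB that unfolding partition_on_def by auto
  show ?thesis
    using L1 L2 Dg
  proof eventually_elim
    fix w
    assume l1: "\<forall>k\<in>UNIV. (\<lambda>n. smean n (\<lambda>t. V t w k)) \<longlonglongrightarrow> expectation (\<lambda>w. V 0 w k)"
      and l2: "\<forall>p\<in>UNIV. (\<lambda>n. smean n (\<lambda>t. V t w (fst p) * V t w (snd p))) \<longlonglongrightarrow> expectation (\<lambda>w. V 0 w (fst p) * V 0 w (snd p))"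
      and dg: "\<forall>S\<in>UNIV. pvar M (avg S 0) = 0 \<longrightarrow> (\<forall>t. avg S t w = expectation (avg S 0))"
    have pair: "(\<lambda>n. scor n (\<lambda>t. (\<Sum>i\<in>\<nu>A. XA t i w + eA t i w) / real (card \<nu>A))
                 (\<lambda>t. (\<Sum>j\<in>\<nu>B. XB t j w + eB t j w) / real (card \<nu>B)))
      \<longlonglongrightarrow> rho / sqrt (((\<Sum>i\<in>\<nu>A. \<Sum>i'\<in>\<nu>A. etaA i i') / (real (card \<nu>A))\<^sup>2
                        + gA2 / (real (card \<nu>A) * sA2))
                    * ((\<Sum>j\<in>\<nu>B. \<Sum>j'\<in>\<nu>B. etaB j j') / (real (card \<nu>B))\<^sup>2
                        + gB2 / (real (card \<nu>B) * sB2)))"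
      if A: "\<nu>A \<in> CA" and B: "\<nu>B \<in> CB" for \<nu>A \<nu>B
    proof -
      have finA: "finite \<nu>A" and neA: "\<nu>A \<noteq> {}" using clA[OF A] by auto
      have finB: "finite \<nu>B" and neB: "\<nu>B \<noteq> {}" using clB[OF B] by auto
      define SA where "SA = (Inl ` \<nu>A :: ('a + 'b) set)"
      define SB where "SB = (Inr ` \<nu>B :: ('a + 'b) set)"
      have avgA: "avg SA t = (\<lambda>w'. (\<Sum>i\<in>\<nu>A. XA t i w' + eA t i w') / real (card \<nu>A))" for t
        unfolding avg_def SA_def by (simp add: sum.reindex card_image V_def)
      have avgB: "avg SB t = (\<lambda>w'. (\<Sum>j\<in>\<nu>B. XB t j w' + eB t j w') / real (card \<nu>B))" for t
        unfolding avg_def SB_def by (simp add: sum.reindex card_image V_def)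
      define bA where "bA = (\<Sum>i\<in>\<nu>A. \<Sum>i'\<in>\<nu>A. etaA i i') / (real (card \<nu>A))\<^sup>2 + gA2 / (real (card \<nu>A) * sA2)"
      define bB where "bB = (\<Sum>j\<in>\<nu>B. \<Sum>j'\<in>\<nu>B. etaB j j') / (real (card \<nu>B))\<^sup>2 + gB2 / (real (card \<nu>B) * sB2)"
      have pA: "pvar M (avg SA 0) = sA2 * bA"
        unfolding avgA bA_def by (rule popA[OF P measA sqA sA_pos varXA vareA unc_eAeA unc_eAXA etaA_def finA neA])
      have pB: "pvar M (avg SB 0) = sB2 * bB"
        unfolding avgB bB_def by (rule popA[OF P measB sqB sB_pos varXB vareB unc_eBeB unc_eBXB etaB_def finB neB])
      have pAB: "pcov M (avg SA 0) (avg SB 0) = rho * sqrt (sA2 * sB2)"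
        unfolding avgA avgB
        by (rule popAB[OF P measA measB sqA sqB varXA varXB unc_eAeB unc_eAXB unc_eBXA corAB sA_pos sB_pos finA neA finB neB])
      have lhs: "(\<lambda>n. scor n (\<lambda>t. (\<Sum>i\<in>\<nu>A. XA t i w + eA t i w) / real (card \<nu>A))
                 (\<lambda>t. (\<Sum>j\<in>\<nu>B. XB t j w + eB t j w) / real (card \<nu>B)))
             = (\<lambda>n. scor n (\<lambda>t. avg SA t w) (\<lambda>t. avg SB t w))"
        by (simp add: avgA avgB)
      show ?thesis
        unfolding lhs bA_def[symmetric] bB_def[symmetric]
      proof (cases "bA = 0 \<or> bB = 0")
        case True
        then show "(\<lambda>n. scor n (\<lambda>t. avg SA t w) (\<lambda>t. avg SB t w)) \<longlonglongrightarrow> rho / sqrt (bA * bB)"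
        proof
          assume b: "bA = 0"
          then have "pvar M (avg SA 0) = 0" using pA by simp
          then have "\<forall>t. avg SA t w = expectation (avg SA 0)" using dg by auto
          then have "scor n (\<lambda>t. avg SA t w) (\<lambda>t. avg SB t w) = 0" for n by (intro scor_const1) auto
          then show ?thesis using b by simp
        next
          assume b: "bB = 0"
          then have "pvar M (avg SB 0) = 0" using pB by simp
          then have "\<forall>t. avg SB t w = expectation (avg SB 0)" using dg by auto
          then have "scor n (\<lambda>t. avg SA t w) (\<lambda>t. avg SB t w) = 0" for n by (intro scor_const2) auto
          then show ?thesis using b by simp
        qed
      next
        case False
        then have bA0: "bA \<noteq> 0" and bB0: "bB \<noteq> 0" by auto
        let ?A = "avg SA 0" and ?B = "avg SB 0"
        have vA: "pvar M ?A = expectation (\<lambda>w. ?A w * ?A w) - expectation ?A * expectation ?A"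
          unfolding pvar_pcov by (rule pcov_eq[OF sqavg sqavg])
        have vB: "pvar M ?B = expectation (\<lambda>w. ?B w * ?B w) - expectation ?B * expectation ?B"
          unfolding pvar_pcov by (rule pcov_eq[OF sqavg sqavg])
        have cAB: "pcov M ?A ?B = expectation (\<lambda>w. ?A w * ?B w) - expectation ?A * expectation ?B"
          by (rule pcov_eq[OF sqavg sqavg])
        have pos: "pvar M ?A * pvar M ?B \<noteq> 0" using pA pB bA0 bB0 sA_pos sB_pos by simp
        have "(\<lambda>n. scor n (\<lambda>t. avg SA t w) (\<lambda>t. avg SB t w)) \<longlonglongrightarrow> pcov M ?A ?B / sqrt (pvar M ?A * pvar M ?B)"
          unfolding vA vB cAB
          by (rule scor_lim[OF gen1[OF l1] gen1[OF l1] gen2[OF l2] gen2[OF l2] gen2[OF l2]])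
             (use pos vA vB in simp)
        also have "pcov M ?A ?B / sqrt (pvar M ?A * pvar M ?B) = rho / sqrt (bA * bB)"
        proof -
          have sp: "0 < sqrt (sA2 * sB2)" using sA_pos sB_pos by simp
          have "sqrt (pvar M ?A * pvar M ?B) = sqrt (sA2 * sB2) * sqrt (bA * bB)"
            unfolding pA pB by (simp add: real_sqrt_mult[symmetric] algebra_simps)
          then show ?thesis unfolding pAB using sp sA_pos sB_pos by simp
        qed
        finally show "(\<lambda>n. scor n (\<lambda>t. avg SA t w) (\<lambda>t. avg SB t w)) \<longlonglongrightarrow> rho / sqrt (bA * bB)" .
      qed
    qed
    show "(\<lambda>n. (1 / (real (card CA) * real (card CB))) *
       (\<Sum>\<nu>A\<in>CA. \<Sum>\<nu>B\<in>CB.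
          scor n (\<lambda>t. (\<Sum>i\<in>\<nu>A. XA t i w + eA t i w) / real (card \<nu>A))
                 (\<lambda>t. (\<Sum>j\<in>\<nu>B. XB t j w + eB t j w) / real (card \<nu>B))))
    \<longlonglongrightarrow>
    (1 / (real (card CA) * real (card CB))) *
       (\<Sum>\<nu>A\<in>CA. \<Sum>\<nu>B\<in>CB.
          rho / sqrt (((\<Sum>i\<in>\<nu>A. \<Sum>i'\<in>\<nu>A. etaA i i') / (real (card \<nu>A))\<^sup>2
                        + gA2 / (real (card \<nu>A) * sA2))
                    * ((\<Sum>j\<in>\<nu>B. \<Sum>j'\<in>\<nu>B. etaB j j') / (real (card \<nu>B))\<^sup>2
                        + gB2 / (real (card \<nu>B) * sB2))))"
      by (intro tendsto_mult_left tendsto_sum pair)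
  qed
qed

end
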